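(* For each $\sigma \in (\frac12,1)$ let $c_\sigma>0$ and $f_\sigma:(0,\infty)\to(0,1)$ be determined by: $f_\sigma$ is the unique continuous solution with values in $(0,1)$ of \[ \frac{f_\sigma(x)}{(1-f_\sigma(x)^2)^2} = \left(\frac{c_\sigma}{x}\right)^\sigma, \qquad \text{and} \qquad \int_0^\infty \frac{f_\sigma(x)^2}{1-f_\sigma(x)^2}\,dx = 1.\] Then for each $\sigma\in(\frac12,1)$: (1) $f_\sigma$ is smooth, decreasing, and a bijection $(0,\infty) \to (0,1)$. (2) $f_\sigma(x) \leq \left(\frac{c_\sigma}{x}\right)^\sigma$ for all $x>0$. (3) $\min\left(\frac{1}{2}, \frac{1}{4}\left(\frac{x}{c_\sigma}\right)^{\sigma/2}\right) \leq 1 - f_\sigma(x) \leq \left(\frac{x}{c_\sigma}\right)^{\sigma/2}$ for all $x>0$. (4) $c_\sigma = \dfrac{\Gamma(\frac{3}{2\sigma})}{\Gamma(1 - \frac{1}{2\sigma})\Gamma(\frac{2}{\sigma}-1)}$; in particular $c_\sigma <1$, $c_\sigma \to \frac{1}{2}$ as $\sigma \uparrow 1$, and $c_\sigma \sim 2\sigma - 1$ as $\sigma \downarrow \frac12$. (5) The Mellin transform $\hat{f}_\sigma(s) =\int_0^\infty f_\sigma(x) x^{s-1}dx$ converges absolutely in $0 < \Re(s) < \sigma$ and equals \[\hat{f}_\sigma(s) = \frac{c_\sigma^s}{2s}\,\frac{\Gamma(\frac{1}{2} - \frac{s}{2\sigma})\Gamma(\frac{2s}{\sigma} + 1)}{\Gamma(\frac{3}{2}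 + \frac{3s}{2\sigma})};\] in particular $\hat{f}_\sigma(1-\sigma) = \frac{1}{2(1-\sigma)}c_\sigma^{-\sigma}$. (6) With $g_\sigma(x) = \frac{f_\sigma(x)^2}{1-f_\sigma(x)^2}$, the integral $\hat{g}_\sigma(s) = \int_0^\infty g_\sigma(x)x^{s-1}dx$ converges absolutely in $\frac{\sigma}{2} < \Re(s) < 2\sigma$ and equals \[\hat{g}_\sigma(s) = \frac{c_\sigma^s}{s}\,\frac{\Gamma(1 -\frac{s}{2\sigma})\Gamma(\frac{2s}{\sigma} - 1)}{\Gamma(\frac{3s}{2\sigma})}.\] *)

theory Defs
  imports "HOL-Analysis.Analysis" "HOL-Library.Landau_Symbols"
begin

definition smooth_on_real :: "real set \<Rightarrow> (real \<Rightarrow> real) \<Rightarrow> bool" where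
  "smooth_on_real S f \<longleftrightarrow> (\<forall>n. \<forall>x\<in>S. ((deriv ^^ n) f) differentiable (at x))"

definition c_formula :: "real \<Rightarrow> real" where
  "c_formula \<sigma> = Gamma (3 / (2*\<sigma>)) / (Gamma (1 - 1/(2*\<sigma>)) * Gamma (2/\<sigma> - 1))"

end

theory Submission
  imports Defs
begin




lemma abs_int_to_lborel:
  fixes f :: "real \<Rightarrow> 'b::euclidean_space"
  assumes "f absolutely_integrable_on S" "(\<lambda>x. indicator S x *\<^sub>R f x) \<in> borel_measurable borel"
  shows "set_integrable lborel S f" "(LINT x:S|lborel. f x) = integral S f"
proof -
  show 1: "set_integrable lborel S f"
    using assms unfolding set_integrable_def
    by (subst (asm) integrable_completion) auto
  show "(LINT x:S|lborel. f x) = integral S f"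
    by (rule set_borel_integral_eq_integral(2)[OF 1])
qed

lemma gamma_scaled:
  assumes z: "Re z > 0" and a: "a > 0"
  shows "(\<lambda>t. of_real t powr (z - 1) / of_real (exp (a * t))) absolutely_integrable_on {0<..} \<and>
         integral {0<..} (\<lambda>t. of_real t powr (z - 1) / of_real (exp (a * t))) = Gamma z / of_real a powr z"
proof -
  let ?f = "\<lambda>u. complex_of_real u powr (z - 1) / of_real (exp u)"
  have der: "\<And>x. x \<in> {0<..} \<Longrightarrow> ((\<lambda>t. a * t) has_field_derivative a) (at x within {0<..})"
    by (auto intro!: derivative_eq_intros)
  have inj: "inj_on (\<lambda>t. a * t) {0<..}" using a by (auto simp: inj_on_def)
  have img: "(\<lambda>t. a * t) ` {0<..} = ({0<..} :: real set)"
  proof safe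
    fix y :: real assume "y > 0"
    thus "y \<in> (\<lambda>t. a * t) ` {0<..}" using a by (intro image_eqI[of _ _ "y / a"]) auto
  qed (use a in auto)
  have G: "?f absolutely_integrable_on {0<..} \<and> integral {0<..} ?f = Gamma z"
    using absolutely_integrable_Gamma_integral'[OF z] Gamma_integral_complex'[OF z]
    by (auto simp: has_integral_iff)
  from has_absolute_integral_change_of_variables_real[OF _ der inj, of ?f "Gamma z"] G img
  have H: "(\<lambda>x. \<bar>a\<bar> *\<^sub>R ?f (a * x)) absolutely_integrable_on {0<..} \<and>
        integral {0<..} (\<lambda>x. \<bar>a\<bar> *\<^sub>R ?f (a * x)) = Gamma z" by simp
  have eq: "\<bar>a\<bar> *\<^sub>R ?f (a * x) = (of_real a powr z) * (of_real x powr (z - 1) / of_real (exp (a * x)))"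
    if "x > 0" for x
  proof -
    have "complex_of_real (a * x) powr (z - 1) = of_real a powr (z - 1) * of_real x powr (z - 1)"
      using a that by (subst of_real_mult, subst powr_times_real) auto
    moreover have "complex_of_real a powr z = of_real a * of_real a powr (z - 1)"
      using a by (simp add: powr_def exp_diff[symmetric] exp_add[symmetric] algebra_simps
                     flip: exp_add  Ln_of_real) (simp add: exp_diff exp_of_real Ln_of_real)
    ultimately show ?thesis using a by (simp add: scaleR_conv_of_real)
  qed
  have nz: "complex_of_real a powr z \<noteq> 0" using a by simp
  have H1: "(\<lambda>x. (of_real a powr z) * (of_real x powr (z - 1) / of_real (exp (a * x)))) absolutely_integrable_on {0<..} \<and>
        integral {0<..} (\<lambda>x. (of_real a powr z) * (of_real x powr (z - 1) / of_real (exp (a * x)))) = Gamma z"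
  proof -
    have e: "\<And>x. x \<in> {0<..} \<Longrightarrow> \<bar>a\<bar> *\<^sub>R ?f (a * x) = (of_real a powr z) * (of_real x powr (z - 1) / of_real (exp (a * x)))"
      using eq by auto
    have c1: "set_integrable lebesgue {0<..} (\<lambda>x. \<bar>a\<bar> *\<^sub>R ?f (a * x)) = set_integrable lebesgue {0<..} (\<lambda>x. (of_real a powr z) * (of_real x powr (z - 1) / of_real (exp (a * x))))"
      by (intro set_integrable_cong refl e)
    have c2: "integral {0<..} (\<lambda>x. \<bar>a\<bar> *\<^sub>R ?f (a * x)) = integral {0<..} (\<lambda>x. (of_real a powr z) * (of_real x powr (z - 1) / of_real (exp (a * x))))"
      by (intro integral_cong e)
    show ?thesis using H unfolding c1 c2 .
  qed
  define I where "I = (\<lambda>x. complex_of_real x powr (z - 1) / complex_of_real (exp (a * x)))"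
  have "(\<lambda>x. inverse (of_real a powr z) * ((of_real a powr z) * I x)) absolutely_integrable_on {0<..}"
  proof (rule set_integrable_mult_right)
    show "set_integrable lebesgue {0<..} (\<lambda>x. complex_of_real a powr z * I x)"
      using H1 unfolding I_def by (simp add: mult.assoc)
  qed
  moreover have "(\<lambda>x. inverse (of_real a powr z) * ((of_real a powr z) * I x)) = I"
    using nz by auto
  ultimately have 1: "I absolutely_integrable_on {0<..}" by simp
  have "integral {0<..} (\<lambda>x. (of_real a powr z) * I x) = (of_real a powr z) * integral {0<..} I"
    by (rule integral_mult_right)
  with H1 nz have "integral {0<..} I = Gamma z / of_real a powr z"
    unfolding I_def by (simp add: field_simps)
  with 1 show ?thesis unfolding I_def by simp
qed

lemma set_integrable_of_real_iff:
  "set_integrable M S (\<lambda>x. complex_of_real (f x)) \<longleftrightarrow> set_integrable M S f"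
  unfolding set_integrable_def
  by (subst complex_of_real_integrable_eq[symmetric]) (simp add: scaleR_conv_of_real)

lemma set_integral_of_real:
  "(LINT x:S|M. complex_of_real (f x)) = complex_of_real (LINT x:S|M. f x)"
  unfolding set_lebesgue_integral_def
  by (subst integral_complex_of_real[symmetric]) (simp add: scaleR_conv_of_real)

lemma gamma_scaled_lborel:
  assumes z: "Re z > 0" and a: "a > 0"
  shows "set_integrable lborel {0<..} (\<lambda>t. of_real t powr (z - 1) / of_real (exp (a * t))) \<and>
         (LINT t:{0<..}|lborel. of_real t powr (z - 1) / of_real (exp (a * t))) = Gamma z / of_real a powr z"
proof -
  have m: "(\<lambda>t. indicator {0<..} t *\<^sub>R (of_real t powr (z - 1) / of_real (exp (a * t)))) \<in> borel_measurable borel"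
    by (intro borel_measurable_continuous_on_indicator continuous_intros) auto
  from gamma_scaled[OF z a] abs_int_to_lborel[OF _ m] show ?thesis by auto
qed

lemma gamma_scaled_real:
  fixes r a :: real
  assumes r: "r > 0" and a: "a > 0"
  shows "set_integrable lborel {0<..} (\<lambda>t. t powr (r - 1) / exp (a * t)) \<and>
         (LINT t:{0<..}|lborel. t powr (r - 1) / exp (a * t)) = Gamma r / a powr r"
proof -
  have e: "complex_of_real t powr (complex_of_real r - 1) / of_real (exp (a * t)) = of_real (t powr (r - 1) / exp (a * t))"
    if "t \<in> {0<..}" for t
    using that by (simp add: powr_of_real[symmetric])
  have G: "Gamma (complex_of_real r) / of_real a powr (of_real r) = of_real (Gamma r / a powr r)"
    using a by (simp add: Gamma_complex_of_real powr_of_real)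
  from gamma_scaled_lborel[of "of_real r" a] r a
  have "set_integrable lborel {0<..} (\<lambda>t. complex_of_real t powr (complex_of_real r - 1) / of_real (exp (a * t))) \<and>
    (LINT t:{0<..}|lborel. complex_of_real t powr (complex_of_real r - 1) / of_real (exp (a * t))) = Gamma (complex_of_real r) / of_real a powr (of_real r)"
    by simp
  also have "set_integrable lborel {0<..} (\<lambda>t. complex_of_real t powr (complex_of_real r - 1) / of_real (exp (a * t)))
     \<longleftrightarrow> set_integrable lborel {0<..} (\<lambda>t. complex_of_real (t powr (r - 1) / exp (a * t)))"
    by (intro set_integrable_cong refl e)
  also have "(LINT t:{0<..}|lborel. complex_of_real t powr (complex_of_real r - 1) / of_real (exp (a * t)))
     = (LINT t:{0<..}|lborel. complex_of_real (t powr (r - 1) / exp (a * t)))"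
    by (intro set_lebesgue_integral_cong) (auto simp: e)
  finally show ?thesis unfolding set_integrable_of_real_iff set_integral_of_real G of_real_eq_iff .
qed

lemma Re_pos_not_nonpos_Ints: "Re (z::complex) > 0 \<Longrightarrow> z \<notin> \<int>\<^sub>\<le>\<^sub>0"
  by (auto elim!: nonpos_Ints_cases)

lemma Gamma_Re_pos_nz: "Re (z::complex) > 0 \<Longrightarrow> Gamma z \<noteq> 0"
  using Re_pos_not_nonpos_Ints by (auto simp: Gamma_eq_zero_iff)

lemma beta_fubini:
  assumes p: "Re p > 0" and q: "Re q > 0"
  shows "set_integrable lborel {0<..} (\<lambda>y. of_real y powr (q - 1) / of_real (1 + y) powr (p + q)) \<and>
         Gamma p * Gamma q = Gamma (p + q) * (LINT y:{0<..}|lborel. of_real y powr (q - 1) / of_real (1 + y) powr (p + q))"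
proof -
  define G where "G t y = of_real t powr (p + q - 1) * of_real y powr (q - 1) / of_real (exp (t * (1 + y)))" for t y :: real
  define F where "F z = indicator ({0<..} \<times> {0<..}) z *\<^sub>R G (fst z) (snd z)" for z :: "real \<times> real"
  have pq: "Re (p + q) > 0" using p q by simp
  have inner_y: "set_integrable lborel {0<..} (G t) \<and>
       (LINT y:{0<..}|lborel. G t y) = Gamma q * of_real t powr (p - 1) / of_real (exp t)" if t: "t > 0" for t
  proof -
    have e: "G t y = (of_real t powr (p + q - 1) / of_real (exp t)) * (of_real y powr (q - 1) / of_real (exp (t * y)))" for y
      by (simp add: G_def algebra_simps exp_add)
    have c: "of_real t powr (p + q - 1) / of_real (exp t) * (Gamma q / of_real t powr q) = Gamma q * of_real t powr (p - 1) / of_real (exp t)"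
      using t by (simp add: powr_diff powr_add field_simps)
    from gamma_scaled_lborel[OF q t] have I1: "set_integrable lborel {0<..} (\<lambda>y. of_real y powr (q - 1) / of_real (exp (t * y)))"
      and I2: "(LINT y:{0<..}|lborel. of_real y powr (q - 1) / of_real (exp (t * y))) = Gamma q / of_real t powr q" by auto
    show ?thesis unfolding e set_integral_mult_right I2 c using set_integrable_mult_right[OF I1] by blast
  qed
  have inner_t: "set_integrable lborel {0<..} (\<lambda>t. G t y) \<and>
       (LINT t:{0<..}|lborel. G t y) = of_real y powr (q - 1) * (Gamma (p + q) / of_real (1 + y) powr (p + q))" if y: "y > 0" for y
  proof -
    have e: "G t y = of_real y powr (q - 1) * (of_real t powr (p + q - 1) / of_real (exp ((1 + y) * t)))" for t
      by (simp add: G_def algebra_simps)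
    have y1: "1 + y > 0" using y by simp
    from gamma_scaled_lborel[OF pq y1] have I1: "set_integrable lborel {0<..} (\<lambda>t. of_real t powr (p + q - 1) / of_real (exp ((1 + y) * t)))"
      and I2: "(LINT t:{0<..}|lborel. of_real t powr (p + q - 1) / of_real (exp ((1 + y) * t))) = Gamma (p + q) / of_real (1 + y) powr (p + q)" by auto
    show ?thesis unfolding e set_integral_mult_right I2 using set_integrable_mult_right[OF I1] by blast
  qed
  have normG: "norm (G t y) = t powr (Re p + Re q - 1) / exp t * (y powr (Re q - 1) / exp (t * y))" if "t > 0" "y > 0" for t y
    using that by (simp add: G_def norm_mult norm_divide norm_powr_real_powr exp_add field_simps)
  have meas: "F \<in> borel_measurable (lborel \<Otimes>\<^sub>M lborel)"
  proof -
    have "F \<in> borel_measurable borel" unfolding F_def G_def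
      by (intro borel_measurable_continuous_on_indicator continuous_intros)
         (auto simp: open_Times intro!: borel_open)
    also have "borel_measurable borel = borel_measurable (lborel \<Otimes>\<^sub>M lborel)"
      by (rule measurable_cong_sets) (simp_all add: borel_prod[symmetric])
    finally show ?thesis .
  qed
  have Fy: "(\<lambda>y. F (t, y)) = (\<lambda>y. indicator {0<..} t *\<^sub>R (indicator {0<..} y *\<^sub>R G t y))" for t
    by (auto simp: F_def indicator_def fun_eq_iff)
  have Ft: "(\<lambda>t. F (t, y)) = (\<lambda>t. indicator {0<..} y *\<^sub>R (indicator {0<..} t *\<^sub>R G t y))" for y
    by (auto simp: F_def indicator_def fun_eq_iff)
  have normint: "(\<integral>y. norm (F (t, y)) \<partial>lborel) = indicator {0<..} t *\<^sub>R (Gamma (Re q) * (t powr (Re p - 1) / exp t))" for t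
  proof (cases "t > 0")
    case True
    have "(\<integral>y. norm (F (t, y)) \<partial>lborel) = (LINT y:{0<..}|lborel. t powr (Re p + Re q - 1) / exp t * (y powr (Re q - 1) / exp (t * y)))"
      unfolding set_lebesgue_integral_def using True
      by (intro Bochner_Integration.integral_cong) (auto simp: F_def indicator_def normG)
    also have "\<dots> = t powr (Re p + Re q - 1) / exp t * (Gamma (Re q) / t powr (Re q))"
      using gamma_scaled_real[of "Re q" t] q True by (simp only: set_integral_mult_right)
    also have "\<dots> = Gamma (Re q) * (t powr (Re p - 1) / exp t)"
      using True by (simp add: powr_diff powr_add field_simps)
    finally show ?thesis using True by simp
  qed (auto simp: F_def indicator_def)
  have integ1: "integrable lborel (\<lambda>t. \<integral>y. norm (F (t, y)) \<partial>lborel)"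
  proof -
    have "set_integrable lborel {0<..} (\<lambda>t. t powr (Re p - 1) / exp t)"
      using gamma_scaled_real[of "Re p" 1] p by simp
    hence "set_integrable lborel {0<..} (\<lambda>t. Gamma (Re q) * (t powr (Re p - 1) / exp t))"
      by (rule set_integrable_mult_right)
    thus ?thesis unfolding normint set_integrable_def .
  qed
  have integ2: "AE t in lborel. integrable lborel (\<lambda>y. F (t, y))"
  proof (rule AE_I2)
    fix t :: real
    show "integrable lborel (\<lambda>y. F (t, y))"
    proof (cases "t > 0")
      case True
      thus ?thesis unfolding Fy using inner_y[OF True] by (simp add: set_integrable_def)
    qed (simp add: Fy)
  qed
  have int: "integrable (lborel \<Otimes>\<^sub>M lborel) (\<lambda>(t, y). F (t, y))"
    using lborel_pair.Fubini_integrable[OF meas integ1 integ2] by simp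
  have ity: "(\<integral>y. F (t, y) \<partial>lborel) = indicator {0<..} t *\<^sub>R (Gamma q * (of_real t powr (p - 1) / of_real (exp t)))" for t
  proof (cases "t > 0")
    case True
    have "(\<integral>y. F (t, y) \<partial>lborel) = (LINT y:{0<..}|lborel. G t y)"
      unfolding Fy set_lebesgue_integral_def using True by simp
    thus ?thesis using inner_y[OF True] True by simp
  qed (simp add: Fy)
  have itt: "(\<integral>t. F (t, y) \<partial>lborel) = indicator {0<..} y *\<^sub>R (Gamma (p + q) * (of_real y powr (q - 1) / of_real (1 + y) powr (p + q)))" for y
  proof (cases "y > 0")
    case True
    have "(\<integral>t. F (t, y) \<partial>lborel) = (LINT t:{0<..}|lborel. G t y)"
      unfolding Ft set_lebesgue_integral_def using True by simp
    thus ?thesis using inner_t[OF True] True by simp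
  qed (simp add: Ft)
  have "integrable lborel (\<lambda>y. \<integral>t. F (t, y) \<partial>lborel)"
    using lborel_pair.integrable_snd[OF int] .
  hence "set_integrable lborel {0<..} (\<lambda>y. Gamma (p + q) * (of_real y powr (q - 1) / of_real (1 + y) powr (p + q)))"
    unfolding itt set_integrable_def .
  moreover have "Gamma (p + q) \<noteq> 0" using pq by (rule Gamma_Re_pos_nz)
  ultimately have I: "set_integrable lborel {0<..} (\<lambda>y. of_real y powr (q - 1) / of_real (1 + y) powr (p + q))"
    by (subst (asm) set_integrable_mult_right_iff) auto
  have "(\<integral>y. (\<integral>t. F (t, y) \<partial>lborel) \<partial>lborel) = (\<integral>t. (\<integral>y. F (t, y) \<partial>lborel) \<partial>lborel)"
    by (rule lborel_pair.Fubini_integral) (use int in simp)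
  also have "(\<integral>t. (\<integral>y. F (t, y) \<partial>lborel) \<partial>lborel) = Gamma q * (LINT t:{0<..}|lborel. of_real t powr (p - 1) / of_real (exp (1 * t)))"
    unfolding ity set_lebesgue_integral_def[symmetric] set_integral_mult_right by simp
  also have "\<dots> = Gamma q * Gamma p" using gamma_scaled_lborel[OF p, of 1] by simp
  also have "(\<integral>y. (\<integral>t. F (t, y) \<partial>lborel) \<partial>lborel) = Gamma (p + q) * (LINT y:{0<..}|lborel. of_real y powr (q - 1) / of_real (1 + y) powr (p + q))"
    unfolding itt set_lebesgue_integral_def[symmetric] set_integral_mult_right by simp
  finally show ?thesis using I by (simp add: mult.commute)
qed

lemma cpow_real: "x > 0 \<Longrightarrow> complex_of_real x powr w = exp (w * of_real (ln x))"
  by (simp add: powr_def Ln_of_real)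


lemma lborel_to_lebesgue:
  fixes f :: "real \<Rightarrow> 'b::euclidean_space"
  assumes "set_integrable lborel S f"
  shows "f absolutely_integrable_on S" "integral S f = (LINT x:S|lborel. f x)"
proof -
  from assms have m: "(\<lambda>x. indicator S x *\<^sub>R f x) \<in> borel_measurable lborel"
    unfolding set_integrable_def by (rule borel_measurable_integrable)
  show "f absolutely_integrable_on S" using assms m unfolding set_integrable_def
    by (subst integrable_completion) auto
  show "integral S f = (LINT x:S|lborel. f x)"
    by (rule set_borel_integral_eq_integral(2)[OF assms, symmetric])
qed

lemma beta_complex:
  assumes a: "Re a > 0" and b: "Re b > 0"
  shows "(\<lambda>v. of_real v powr (a - 1) * of_real (1 - v) powr (b - 1)) absolutely_integrable_on {0<..<1} \<and>
         integral {0<..<1} (\<lambda>v. of_real v powr (a - 1) * of_real (1 - v) powr (b - 1)) = Beta a b"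
proof -
  define J where "J = (LINT y:{0<..}|lborel. of_real y powr (a - 1) / of_real (1 + y) powr (b + a))"
  from beta_fubini[OF b a] have I: "set_integrable lborel {0<..} (\<lambda>y. of_real y powr (a - 1) / of_real (1 + y) powr (b + a))"
    and E: "Gamma b * Gamma a = Gamma (b + a) * J" unfolding J_def by auto
  have JB: "J = Beta a b"
    using E Gamma_Re_pos_nz[of "b + a"] a b unfolding Beta_def by (simp add: field_simps add.commute)
  have der: "((\<lambda>v. v / (1 - v)) has_field_derivative (1 / (1 - v)\<^sup>2)) (at v within {0<..<1})"
    if "v \<in> {0<..<1}" for v :: real
    using that by (auto intro!: derivative_eq_intros simp: field_simps power2_eq_square)
  have inj: "inj_on (\<lambda>v. v / (1 - v)) {0<..<1::real}"
    by (auto simp: inj_on_def field_simps)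
  have img: "(\<lambda>v. v / (1 - v)) ` {0<..<1} = ({0<..} :: real set)"
  proof safe
    fix y :: real assume "y > 0"
    thus "y \<in> (\<lambda>v. v / (1 - v)) ` {0<..<1}"
      by (intro image_eqI[of _ _ "y / (1 + y)"]) (auto simp: field_simps)
  qed (auto simp: field_simps)
  have pw: "\<bar>1 / (1 - v)\<^sup>2\<bar> *\<^sub>R (of_real (v / (1 - v)) powr (a - 1) / of_real (1 + v / (1 - v)) powr (b + a))
      = of_real v powr (a - 1) * of_real (1 - v) powr (b - 1)" if v: "v \<in> {0<..<1}" for v :: real
  proof -
    from v have v00: "v > 0" "1 - v > 0" "v / (1 - v) > 0" by auto
    hence v0: "v > 0" "1 - v > 0" "v / (1 - v) > 0" "1 + v / (1 - v) > 0" by linarith+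
    have l1: "ln (v / (1 - v)) = ln v - ln (1 - v)" using v0 by (simp add: ln_div)
    have l2: "1 + v / (1 - v) = 1 / (1 - v)" using v0 by (simp add: field_simps)
    have l3: "ln (1 / (1 - v)) = - ln (1 - v)" using v0 by (simp add: ln_div)
    have l4: "\<bar>1 / (1 - v)\<^sup>2\<bar> = exp (- 2 * ln (1 - v))"
    proof -
      have "exp (2 * ln (1 - v)) = (1 - v)\<^sup>2"
        using v0 by (subst ln_realpow[symmetric, where n=2, simplified]) auto
      thus ?thesis using v0 by (simp add: exp_minus field_simps)
    qed
    show ?thesis
      unfolding scaleR_conv_of_real l4 cpow_real[OF v0(1)] cpow_real[OF v0(2)] cpow_real[OF v0(3)] cpow_real[OF v0(4)]
      unfolding l2 l3 l1 exp_of_real[symmetric]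
      by (simp add: exp_add[symmetric] exp_diff[symmetric] algebra_simps)
  qed
  have "(\<lambda>y. of_real y powr (a - 1) / of_real (1 + y) powr (b + a)) absolutely_integrable_on (\<lambda>v. v / (1 - v)) ` {0<..<1} \<and>
        integral ((\<lambda>v. v / (1 - v)) ` {0<..<1}) (\<lambda>y. of_real y powr (a - 1) / of_real (1 + y) powr (b + a)) = J"
    unfolding img using lborel_to_lebesgue[OF I] unfolding J_def by simp
  with has_absolute_integral_change_of_variables_real[OF _ der inj, of "\<lambda>y. of_real y powr (a - 1) / of_real (1 + y) powr (b + a)" J]
  have "(\<lambda>v. \<bar>1 / (1 - v)\<^sup>2\<bar> *\<^sub>R (of_real (v / (1 - v)) powr (a - 1) / of_real (1 + v / (1 - v)) powr (b + a))) absolutely_integrable_on {0<..<1} \<and>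
        integral {0<..<1} (\<lambda>v. \<bar>1 / (1 - v)\<^sup>2\<bar> *\<^sub>R (of_real (v / (1 - v)) powr (a - 1) / of_real (1 + v / (1 - v)) powr (b + a))) = J"
    by simp
  also have "(\<lambda>v. \<bar>1 / (1 - v)\<^sup>2\<bar> *\<^sub>R (of_real (v / (1 - v)) powr (a - 1) / of_real (1 + v / (1 - v)) powr (b + a))) absolutely_integrable_on {0<..<1}
     \<longleftrightarrow> (\<lambda>v. of_real v powr (a - 1) * of_real (1 - v) powr (b - 1)) absolutely_integrable_on {0<..<1}"
    by (intro set_integrable_cong refl pw)
  also have "integral {0<..<1} (\<lambda>v. \<bar>1 / (1 - v)\<^sup>2\<bar> *\<^sub>R (of_real (v / (1 - v)) powr (a - 1) / of_real (1 + v / (1 - v)) powr (b + a)))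
     = integral {0<..<1} (\<lambda>v. of_real v powr (a - 1) * of_real (1 - v) powr (b - 1))"
    by (intro integral_cong pw)
  finally show ?thesis unfolding JB .
qed

lemma beta_plus3:
  assumes p: "Re p > 0" and q: "Re q > 0"
  shows "(\<lambda>v. of_real (1 + 3 * v) * (of_real v powr (p - 1) * of_real (1 - v) powr (q - 1))) absolutely_integrable_on {0<..<1} \<and>
         integral {0<..<1} (\<lambda>v. of_real (1 + 3 * v) * (of_real v powr (p - 1) * of_real (1 - v) powr (q - 1))) = Beta p q + 3 * Beta (p + 1) q"
proof -
  have p1: "Re (p + 1) > 0" using p by simp
  note B1 = beta_complex[OF p q] and B2 = beta_complex[OF p1 q]
  have B2': "(\<lambda>v. 3 * (of_real v powr (p + 1 - 1) * of_real (1 - v) powr (q - 1))) absolutely_integrable_on {0<..<1}"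
    using B2 by (intro set_integrable_mult_right) auto
  have e: "of_real (1 + 3 * v) * (of_real v powr (p - 1) * of_real (1 - v) powr (q - 1)) =
     of_real v powr (p - 1) * of_real (1 - v) powr (q - 1) + 3 * (of_real v powr (p + 1 - 1) * of_real (1 - v) powr (q - 1))"
    if v: "v \<in> {0<..<1}" for v
  proof -
    have "complex_of_real v powr (p + 1 - 1) = of_real v * of_real v powr (p - 1)"
    proof -
      have "complex_of_real v = exp (of_real (ln v))" using v by (simp add: exp_of_real)
      hence "of_real v * exp ((p - 1) * complex_of_real (ln v)) = exp (p * complex_of_real (ln v))"
        by (simp add: exp_add[symmetric] algebra_simps)
      thus ?thesis using v by (simp add: cpow_real)
    qed
    thus ?thesis by (simp add: algebra_simps)
  qed
  have S: "(\<lambda>v. of_real v powr (p - 1) * of_real (1 - v) powr (q - 1) + 3 * (of_real v powr (p + 1 - 1) * of_real (1 - v) powr (q - 1))) absolutely_integrable_on {0<..<1}"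
    using B1 B2' by (intro set_integral_add(1)) auto
  have I: "integral {0<..<1} (\<lambda>v. of_real v powr (p - 1) * of_real (1 - v) powr (q - 1) + 3 * (of_real v powr (p + 1 - 1) * of_real (1 - v) powr (q - 1)))
     = Beta p q + 3 * Beta (p + 1) q"
    using B1 B2 set_lebesgue_integral_eq_integral(1)[OF B1[THEN conjunct1]] set_lebesgue_integral_eq_integral(1)[OF B2[THEN conjunct1]]
    by (subst integral_add) (auto simp: integral_mult_right)
  have c1: "integral {0<..<1} (\<lambda>v. of_real (1 + 3 * v) * (of_real v powr (p - 1) * of_real (1 - v) powr (q - 1))) =
     integral {0<..<1} (\<lambda>v. of_real v powr (p - 1) * of_real (1 - v) powr (q - 1) + 3 * (of_real v powr (p + 1 - 1) * of_real (1 - v) powr (q - 1)))"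
    by (intro integral_cong e)
  have c2: "set_integrable lebesgue {0<..<1} (\<lambda>v. of_real (1 + 3 * v) * (of_real v powr (p - 1) * of_real (1 - v) powr (q - 1))) =
     set_integrable lebesgue {0<..<1} (\<lambda>v. of_real v powr (p - 1) * of_real (1 - v) powr (q - 1) + 3 * (of_real v powr (p + 1 - 1) * of_real (1 - v) powr (q - 1)))"
    by (intro set_integrable_cong refl e)
  show ?thesis unfolding c1 c2 using S I by blast
qed




definition smooth_n :: "nat \<Rightarrow> real set \<Rightarrow> (real \<Rightarrow> real) \<Rightarrow> bool" where
  "smooth_n n S g \<longleftrightarrow> (\<forall>k\<le>n. \<forall>x\<in>S. (deriv ^^ k) g differentiable (at x))"

lemma smooth_n_0: "smooth_n 0 S g \<longleftrightarrow> (\<forall>x\<in>S. g differentiable (at x))"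
  by (simp add: smooth_n_def)

lemma smooth_n_Suc: "smooth_n (Suc n) S g \<longleftrightarrow> (\<forall>x\<in>S. g differentiable (at x)) \<and> smooth_n n S (deriv g)"
proof -
  have "(\<forall>k\<le>Suc n. P k) \<longleftrightarrow> P 0 \<and> (\<forall>k\<le>n. P (Suc k))" for P
    by (metis Suc_le_mono le0 not0_implies_Suc)
  thus ?thesis unfolding smooth_n_def by (simp add: funpow_Suc_right del: funpow.simps)
qed

lemma smooth_n_mono: "smooth_n n S g \<Longrightarrow> m \<le> n \<Longrightarrow> smooth_n m S g"
  unfolding smooth_n_def by auto

lemma smooth_n_subset: "smooth_n n S g \<Longrightarrow> T \<subseteq> S \<Longrightarrow> smooth_n n T g"
  unfolding smooth_n_def by auto

lemma smooth_n_diff: "smooth_n n S g \<Longrightarrow> x \<in> S \<Longrightarrow> g differentiable (at x)"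
  unfolding smooth_n_def by (metis funpow_0 le0)

lemma deriv_local:
  assumes "open S" "\<And>x. x \<in> S \<Longrightarrow> g x = h x" "x \<in> S"
  shows "deriv g x = deriv h x"
proof (rule deriv_cong_ev)
  show "eventually (\<lambda>x. g x = h x) (nhds x)"
    using assms by (intro eventually_nhds_in_open[THEN eventually_mono]) auto
qed simp

lemma differentiable_local:
  fixes g h :: "real \<Rightarrow> real"
  assumes "open S" "\<And>x. x \<in> S \<Longrightarrow> g x = h x" "x \<in> S" "g differentiable (at x)"
  shows "h differentiable (at x)"
  using assms unfolding real_differentiable_def
  by (metis has_field_derivative_transform_within_open)

lemma rdiff: "(g::real\<Rightarrow>real) differentiable (at x) \<Longrightarrow> (g has_real_derivative deriv g x) (at x)"
  by (simp add: DERIV_deriv_iff_real_differentiable)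

lemma smooth_n_local:
  assumes "open S" "\<And>x. x \<in> S \<Longrightarrow> g x = h x" "smooth_n n S g"
  shows "smooth_n n S h"
  using assms
proof (induction n arbitrary: g h)
  case 0 thus ?case unfolding smooth_n_0 using differentiable_local by blast
next
  case (Suc n)
  have "\<forall>x\<in>S. h differentiable (at x)"
    using Suc.prems differentiable_local unfolding smooth_n_Suc by blast
  moreover have "smooth_n n S (deriv h)"
    using Suc.IH[of "deriv g" "deriv h"] Suc.prems deriv_local[of S g h] unfolding smooth_n_Suc by blast
  ultimately show ?case unfolding smooth_n_Suc by blast
qed

lemma smooth_n_const: "smooth_n n S (\<lambda>x. a)"
proof (induction n arbitrary: a)
  case 0 thus ?case by (simp add: smooth_n_0)
next
  case (Suc n)
  have "deriv (\<lambda>x. a) = (\<lambda>x. 0)" by (simp add: fun_eq_iff)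
  thus ?case unfolding smooth_n_Suc using Suc.IH by simp
qed

lemma smooth_n_id: "smooth_n n S (\<lambda>x. x)"
proof (cases n)
  case 0 thus ?thesis by (simp add: smooth_n_0)
next
  case (Suc m)
  have "deriv (\<lambda>x. x) = (\<lambda>x. 1::real)" by (simp add: fun_eq_iff)
  thus ?thesis unfolding Suc smooth_n_Suc using smooth_n_const by simp
qed

lemma smooth_n_add:
  assumes "open S" "smooth_n n S g" "smooth_n n S h"
  shows "smooth_n n S (\<lambda>x. g x + h x)"
  using assms(2,3)
proof (induction n arbitrary: g h)
  case 0 thus ?case unfolding smooth_n_0 by auto
next
  case (Suc n)
  have d: "\<forall>x\<in>S. g differentiable (at x)" "\<forall>x\<in>S. h differentiable (at x)"
    using Suc.prems unfolding smooth_n_Suc by auto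
  have g': "smooth_n n S (deriv g)" and h': "smooth_n n S (deriv h)"
    using Suc.prems unfolding smooth_n_Suc by auto
  have "smooth_n n S (\<lambda>x. deriv g x + deriv h x)"
    using Suc.IH[OF g' h'] .
  moreover have "deriv g x + deriv h x = deriv (\<lambda>x. g x + h x) x" if "x \<in> S" for x
    using DERIV_add[OF rdiff rdiff, of g x h] d that by (simp add: DERIV_imp_deriv)
  ultimately have "smooth_n n S (deriv (\<lambda>x. g x + h x))"
    using smooth_n_local[OF assms(1), of "\<lambda>x. deriv g x + deriv h x" "deriv (\<lambda>x. g x + h x)"] by blast
  thus ?case unfolding smooth_n_Suc using d by auto
qed

lemma smooth_n_mult:
  assumes "open S" "smooth_n n S g" "smooth_n n S h"
  shows "smooth_n n S (\<lambda>x. g x * h x)"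
  using assms(2,3)
proof (induction n arbitrary: g h)
  case 0 thus ?case unfolding smooth_n_0 by auto
next
  case (Suc n)
  have d: "\<forall>x\<in>S. g differentiable (at x)" "\<forall>x\<in>S. h differentiable (at x)"
    using Suc.prems unfolding smooth_n_Suc by auto
  have g': "smooth_n n S (deriv g)" and h': "smooth_n n S (deriv h)"
    using Suc.prems unfolding smooth_n_Suc by auto
  have g: "smooth_n n S g" and h: "smooth_n n S h"
    using Suc.prems smooth_n_mono by auto
  have "smooth_n n S (\<lambda>x. g x * deriv h x + deriv g x * h x)"
    by (intro smooth_n_add[OF assms(1)] Suc.IH[OF g h'] Suc.IH[OF g' h])
  moreover have "g x * deriv h x + deriv g x * h x = deriv (\<lambda>x. g x * h x) x" if "x \<in> S" for x
    using DERIV_mult[OF rdiff rdiff, of g x h] d that by (simp add: DERIV_imp_deriv mult_ac)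
  ultimately have "smooth_n n S (deriv (\<lambda>x. g x * h x))"
    using smooth_n_local[OF assms(1), of "\<lambda>x. g x * deriv h x + deriv g x * h x" "deriv (\<lambda>x. g x * h x)"] by blast
  thus ?case unfolding smooth_n_Suc using d by auto
qed

lemma smooth_n_comp:
  assumes S: "open S" and img: "\<And>x. x \<in> S \<Longrightarrow> h x \<in> T"
  shows "smooth_n n T g \<Longrightarrow> smooth_n n S h \<Longrightarrow> smooth_n n S (\<lambda>x. g (h x))"
proof (induction n arbitrary: g)
  case 0
  show ?case unfolding smooth_n_0
  proof
    fix x assume x: "x \<in> S"
    have "g differentiable (at (h x))" using 0(1) img[OF x] unfolding smooth_n_0 by blast
    hence "(g has_real_derivative deriv g (h x)) (at (h x))" by (rule rdiff)
    moreover have "h differentiable (at x)" using 0(2) x unfolding smooth_n_0 by blast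
    hence "(h has_real_derivative deriv h x) (at x)" by (rule rdiff)
    ultimately show "(\<lambda>x. g (h x)) differentiable at x"
      using DERIV_chain2 real_differentiable_def by blast
  qed
next
  case (Suc n)
  have dg: "\<forall>y\<in>T. g differentiable (at y)" and g': "smooth_n n T (deriv g)"
    using Suc.prems unfolding smooth_n_Suc by auto
  have dh: "\<forall>x\<in>S. h differentiable (at x)" and h': "smooth_n n S (deriv h)"
    using Suc.prems unfolding smooth_n_Suc by auto
  have h: "smooth_n n S h" using Suc.prems smooth_n_mono by auto
  have D: "((\<lambda>x. g (h x)) has_real_derivative deriv g (h x) * deriv h x) (at x)" if x: "x \<in> S" for x
  proof -
    have "g differentiable (at (h x))" using dg img[OF x] by blast
    moreover have "h differentiable (at x)" using dh x by blast
    ultimately show ?thesis using DERIV_chain2[OF rdiff rdiff] by blast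
  qed
  have "smooth_n n S (\<lambda>x. deriv g (h x) * deriv h x)"
    by (intro smooth_n_mult[OF S] Suc.IH[OF g' h] h')
  moreover have "deriv g (h x) * deriv h x = deriv (\<lambda>x. g (h x)) x" if "x \<in> S" for x
    using D[OF that] by (simp add: DERIV_imp_deriv)
  ultimately have "smooth_n n S (deriv (\<lambda>x. g (h x)))"
    using smooth_n_local[OF S, of "\<lambda>x. deriv g (h x) * deriv h x" "deriv (\<lambda>x. g (h x))"] by blast
  moreover have "\<forall>x\<in>S. (\<lambda>x. g (h x)) differentiable (at x)"
    using D real_differentiable_def by blast
  ultimately show ?case unfolding smooth_n_Suc by blast
qed

lemma smooth_n_inverse: "smooth_n n (-{0}) (\<lambda>x::real. inverse x)"
proof (induction n)
  case 0 show ?case unfolding smooth_n_0 by (auto intro!: derivative_eq_intros simp: real_differentiable_def)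
next
  case (Suc n)
  have o: "open (-{0::real})" by auto
  have "smooth_n n (-{0}) (\<lambda>x. (-1) * (inverse x * inverse x))"
    by (intro smooth_n_mult[OF o] smooth_n_const Suc.IH)
  moreover have "(-1) * (inverse x * inverse x) = deriv (\<lambda>x. inverse x) x" if "x \<in> -{0}" for x :: real
    using that by (intro DERIV_imp_deriv[symmetric]) (auto intro!: derivative_eq_intros simp: power2_eq_square)
  ultimately have "smooth_n n (-{0}) (deriv (\<lambda>x. inverse x))"
    using smooth_n_local[OF o, of "\<lambda>x. (-1) * (inverse x * inverse x)" "deriv (\<lambda>x. inverse x)"] by blast
  moreover have "\<forall>x\<in>-{0::real}. (\<lambda>x. inverse x) differentiable (at x)"
    by (auto intro!: derivative_eq_intros simp: real_differentiable_def)
  ultimately show ?case unfolding smooth_n_Suc by blast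
qed

lemma smooth_n_exp: "smooth_n n S (\<lambda>x::real. exp x)"
proof (induction n)
  case 0 show ?case unfolding smooth_n_0 by (auto intro!: derivative_eq_intros simp: real_differentiable_def)
next
  case (Suc n)
  have "deriv (\<lambda>x::real. exp x) = (\<lambda>x. exp x)"
    by (intro ext DERIV_imp_deriv) (auto intro!: derivative_eq_intros)
  thus ?case unfolding smooth_n_Suc using Suc.IH
    by (auto intro!: derivative_eq_intros simp: real_differentiable_def)
qed

lemma smooth_n_ln: "smooth_n n {0<..} (\<lambda>x::real. ln x)"
proof (cases n)
  case 0 show ?thesis unfolding 0 smooth_n_0 by (auto intro!: derivative_eq_intros simp: real_differentiable_def)
next
  case (Suc m)
  have o: "open ({0<..}::real set)" by auto
  have "smooth_n m {0<..} (\<lambda>x::real. inverse x)"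
    by (rule smooth_n_subset[OF smooth_n_inverse]) auto
  moreover have "inverse x = deriv (\<lambda>x. ln x) x" if "x \<in> {0<..}" for x :: real
    using that by (intro DERIV_imp_deriv[symmetric]) (auto intro!: derivative_eq_intros simp: field_simps)
  ultimately have "smooth_n m {0<..} (deriv (\<lambda>x::real. ln x))"
    using smooth_n_local[OF o, of "\<lambda>x. inverse x" "deriv (\<lambda>x. ln x)"] by blast
  moreover have "\<forall>x\<in>({0<..}::real set). (\<lambda>x. ln x) differentiable (at x)"
    by (auto intro!: derivative_eq_intros simp: real_differentiable_def)
  ultimately show ?thesis unfolding Suc smooth_n_Suc by blast
qed




lemma pos_not_nonpos_Ints: "(x::real) > 0 \<Longrightarrow> x \<notin> \<int>\<^sub>\<le>\<^sub>0"
  by (auto dest: nonpos_Ints_nonpos)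

lemma c_formula_Beta:
  assumes "1/2 < \<sigma>" "\<sigma> < 1"
  shows "c_formula \<sigma> = 1 / Beta (1 - 1/(2*\<sigma>)) (2/\<sigma> - 1)"
proof -
  have "1 - 1/(2*\<sigma>) + (2/\<sigma> - 1) = 3 / (2*\<sigma>)" using assms by (simp add: field_simps)
  thus ?thesis unfolding c_formula_def Beta_def by simp
qed

lemma Beta_half_3: "Beta (1/2) (3::real) = 16/15"
proof -
  have h: "(1/2::real) \<notin> \<int>\<^sub>\<le>\<^sub>0" "(3/2::real) \<notin> \<int>\<^sub>\<le>\<^sub>0" "(5/2::real) \<notin> \<int>\<^sub>\<le>\<^sub>0"
    by (auto intro!: pos_not_nonpos_Ints)
  have g1: "Gamma (3/2::real) = 1/2 * Gamma (1/2)" using Gamma_plus1[OF h(1)] by simp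
  have g2: "Gamma (5/2::real) = 3/2 * Gamma (3/2)" using Gamma_plus1[OF h(2)] by simp
  have g3: "Gamma (7/2::real) = 5/2 * Gamma (5/2)" using Gamma_plus1[OF h(3)] by simp
  have g4: "Gamma (3::real) = 2" by (simp add: Gamma_numeral)
  have nz: "Gamma (1/2::real) \<noteq> 0" using Gamma_real_pos[of "1/2::real"] by fastforce
  have G7: "Gamma (7/2::real) = 15/8 * Gamma (1/2)" using g1 g2 g3 by simp
  have "Beta (1/2) (3::real) = Gamma (1/2) * Gamma 3 / Gamma (1/2 + 3)" by (simp only: Beta_def)
  also have "(1/2::real) + 3 = 7/2" by simp
  finally show ?thesis unfolding G7 g4 using nz by (simp add: field_simps)
qed

lemma c_formula_lt1:
  assumes "1/2 < \<sigma>" "\<sigma> < 1"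
  shows "c_formula \<sigma> < 1"
proof -
  have a: "0 < 1 - 1/(2*\<sigma>)" "1 - 1/(2*\<sigma>) \<le> 1/2" using assms by (auto simp: field_simps)
  have b: "0 < 2/\<sigma> - 1" "2/\<sigma> - 1 \<le> 3" using assms by (auto simp: field_simps)
  have "16/15 \<le> Beta (1 - 1/(2*\<sigma>)) (2/\<sigma> - 1)"
    using Beta_real_mono[OF a(1) a(2) b(1) b(2)] Beta_half_3 by simp
  thus ?thesis unfolding c_formula_Beta[OF assms] by (simp add: field_simps)
qed

lemma c_formula_lim1: "(c_formula \<longlongrightarrow> 1/2) (at_left 1)"
proof -
  have h: "(3/2::real) \<notin> \<int>\<^sub>\<le>\<^sub>0" "(1/2::real) \<notin> \<int>\<^sub>\<le>\<^sub>0" "(1::real) \<notin> \<int>\<^sub>\<le>\<^sub>0"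
    by (auto intro!: pos_not_nonpos_Ints)
  have "((\<lambda>\<sigma>::real. Gamma (3 / (2*\<sigma>)) / (Gamma (1 - 1/(2*\<sigma>)) * Gamma (2/\<sigma> - 1))) \<longlongrightarrow>
          Gamma (3 / (2*1)) / (Gamma (1 - 1/(2*1)) * Gamma (2/1 - 1))) (at 1)"
    using h by (intro tendsto_intros) (auto simp: Gamma_eq_zero_iff)
  moreover have "Gamma (3 / (2*1)) / (Gamma (1 - 1/(2*1)) * Gamma (2/1 - 1)) = (1/2::real)"
  proof -
    have "Gamma (3/2::real) = 1/2 * Gamma (1/2)" using Gamma_plus1[OF h(2)] by simp
    moreover have "Gamma (1/2::real) \<noteq> 0" using Gamma_real_pos[of "1/2::real"] by fastforce
    ultimately show ?thesis by simp
  qed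
  ultimately have "(c_formula \<longlongrightarrow> 1/2) (at 1)" unfolding c_formula_def[abs_def] by simp
  thus ?thesis by (rule tendsto_mono[OF at_le, rotated]) simp
qed

lemma c_formula_asymp: "c_formula \<sim>[at_right (1/2)] (\<lambda>t. 2*t - 1)"
proof (rule asymp_equivI')
  define G where "G \<sigma> = Gamma (3 / (2*\<sigma>)) / (2 * \<sigma> * Gamma (1 - 1/(2*\<sigma>) + 1) * Gamma (2/\<sigma> - 1))" for \<sigma> :: real
  have h: "(3::real) \<notin> \<int>\<^sub>\<le>\<^sub>0" "(1::real) \<notin> \<int>\<^sub>\<le>\<^sub>0"
    by (auto intro!: pos_not_nonpos_Ints)
  have "(G \<longlongrightarrow> Gamma (3 / (2*(1/2))) / (2 * (1/2) * Gamma (1 - 1/(2*(1/2)) + 1) * Gamma (2/(1/2) - 1))) (at_right (1/2))"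
    unfolding G_def[abs_def] using h by (intro tendsto_intros) (auto simp: Gamma_eq_zero_iff)
  moreover have "Gamma (3 / (2*(1/2))) / (2 * (1/2) * Gamma (1 - 1/(2*(1/2)) + 1) * Gamma (2/(1/2) - 1)) = (1::real)"
  proof -
    have "Gamma (3::real) = 2" by (simp add: Gamma_numeral)
    thus ?thesis by simp
  qed
  ultimately have lim: "(G \<longlongrightarrow> 1) (at_right (1/2))" by simp
  have ev: "eventually (\<lambda>\<sigma>. G \<sigma> = c_formula \<sigma> / (2 * \<sigma> - 1)) (at_right (1/2))"
  proof -
  have "\<forall>\<sigma>>1/2. \<sigma> < 1 \<longrightarrow> G \<sigma> = c_formula \<sigma> / (2 * \<sigma> - 1)"
  proof (intro allI impI)
    fix \<sigma> :: real assume s1: "1/2 < \<sigma>" and s2: "\<sigma> < 1"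
    have s: "1/2 < \<sigma> \<and> \<sigma> < 1" using s1 s2 by simp
    define e where "e = 1 - 1/(2*\<sigma>)"
    have e0: "e > 0" using s by (auto simp: e_def field_simps)
    have ge: "Gamma (e + 1) = e * Gamma e" using Gamma_plus1[OF pos_not_nonpos_Ints[OF e0]] .
    have e2: "2 * \<sigma> * e = 2 * \<sigma> - 1" using s by (simp add: e_def field_simps)
    have "G \<sigma> = Gamma (3 / (2*\<sigma>)) / ((2 * \<sigma> * e) * Gamma e * Gamma (2/\<sigma> - 1))"
      unfolding G_def e_def[symmetric] ge by (simp add: mult_ac)
    also have "\<dots> = c_formula \<sigma> / (2 * \<sigma> - 1)"
      unfolding e2 c_formula_def e_def by (simp add: field_simps)
    finally show "G \<sigma> = c_formula \<sigma> / (2 * \<sigma> - 1)" .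
  qed
  thus ?thesis unfolding eventually_at_right_field by (intro exI[of _ 1]) auto
  qed
  show "((\<lambda>x. c_formula x / (2 * x - 1)) \<longlongrightarrow> 1) (at_right (1/2))"
    using tendsto_cong[OF ev] lim by simp
qed

locale msetup =
  fixes \<sigma> c :: real and f :: "real \<Rightarrow> real"
  assumes \<sigma>1: "1/2 < \<sigma>" and \<sigma>2: "\<sigma> < 1" and cpos: "c > 0"
    and fcont: "continuous_on {0<..} f"
    and frange: "\<forall>x>0. 0 < f x \<and> f x < 1"
    and feq: "\<forall>x>0. f x / (1 - (f x)\<^sup>2)\<^sup>2 = (c / x) powr \<sigma>"
begin

definition X where "X y = c * ((1 - y\<^sup>2)\<^sup>2 / y) powr (1/\<sigma>)"

lemma \<sigma>pos: "\<sigma> > 0" using \<sigma>1 by simp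

lemma sq_lt1: "0 < (y::real) \<Longrightarrow> y < 1 \<Longrightarrow> y\<^sup>2 < 1"
  using mult_strict_mono[of y 1 y 1] by (simp add: power2_eq_square)

lemma w_pos: "0 < (y::real) \<Longrightarrow> y < 1 \<Longrightarrow> (1 - y\<^sup>2)\<^sup>2 / y > 0"
  using sq_lt1[of y] by simp

lemma f0: "x > 0 \<Longrightarrow> f x > 0" and f1: "x > 0 \<Longrightarrow> f x < 1"
  using frange by auto

lemma xc_pow: assumes x: "x > 0" shows "(x / c) powr \<sigma> = (1 - (f x)\<^sup>2)\<^sup>2 / f x"
proof -
  have y: "0 < f x" "f x < 1" using f0 f1 x by auto
  have "(c / x) powr \<sigma> = f x / (1 - (f x)\<^sup>2)\<^sup>2" using feq x by auto
  hence "inverse ((c / x) powr \<sigma>) = (1 - (f x)\<^sup>2)\<^sup>2 / f x" by simp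
  moreover have "inverse ((c / x) powr \<sigma>) = (x / c) powr \<sigma>"
    using x cpos by (simp add: powr_divide)
  ultimately show ?thesis by simp
qed

lemma X_f: assumes x: "x > 0" shows "X (f x) = x"
proof -
  have "((x / c) powr \<sigma>) powr (1/\<sigma>) = x / c"
    using x cpos \<sigma>pos by (simp add: powr_powr)
  thus ?thesis unfolding X_def using xc_pow[OF x] cpos by simp
qed

lemma X_pos: "0 < y \<Longrightarrow> y < 1 \<Longrightarrow> X y > 0"
  unfolding X_def using cpos w_pos[of y] by (intro mult_pos_pos) auto

lemma X_strict_dec: assumes "0 < y1" "y1 < y2" "y2 < 1" shows "X y2 < X y1"
proof -
  have a: "0 < 1 - y2\<^sup>2" "1 - y2\<^sup>2 < 1 - y1\<^sup>2"
    using assms sq_lt1[of y2] power_strict_mono[of y1 y2 2] by auto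
  have b: "(1 - y2\<^sup>2)\<^sup>2 < (1 - y1\<^sup>2)\<^sup>2" using a by (intro power_strict_mono) auto
  have "(1 - y2\<^sup>2)\<^sup>2 / y2 < (1 - y1\<^sup>2)\<^sup>2 / y1"
  proof -
    have "(1 - y2\<^sup>2)\<^sup>2 / y2 \<le> (1 - y2\<^sup>2)\<^sup>2 / y1"
      using assms by (intro divide_left_mono) auto
    also have "\<dots> < (1 - y1\<^sup>2)\<^sup>2 / y1" using b assms by (intro divide_strict_right_mono) auto
    finally show ?thesis .
  qed
  hence "((1 - y2\<^sup>2)\<^sup>2 / y2) powr (1/\<sigma>) < ((1 - y1\<^sup>2)\<^sup>2 / y1) powr (1/\<sigma>)"
    using assms a \<sigma>pos by (intro powr_less_mono2) auto
  thus ?thesis unfolding X_def using cpos by simp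
qed

lemma X_inj: "0 < y1 \<Longrightarrow> y1 < 1 \<Longrightarrow> 0 < y2 \<Longrightarrow> y2 < 1 \<Longrightarrow> X y1 = X y2 \<Longrightarrow> y1 = y2"
  by (metis X_strict_dec less_irrefl linorder_neqE_linordered_idom)

lemma f_X: assumes "0 < y" "y < 1" shows "f (X y) = y"
proof -
  have x: "X y > 0" using X_pos assms by auto
  have "X (f (X y)) = X y" by (rule X_f[OF x])
  thus ?thesis using X_inj[of "f (X y)" y] f0[OF x] f1[OF x] assms by auto
qed

lemma f_strict_dec: assumes "0 < x" "x < x'" shows "f x' < f x"
proof (rule ccontr)
  assume "\<not> f x' < f x"
  hence "f x \<le> f x'" by simp
  moreover have "f x \<noteq> f x'" using X_f assms by (metis less_irrefl less_trans)
  ultimately have "f x < f x'" by simp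
  hence "X (f x') < X (f x)" using f0 f1 assms by (intro X_strict_dec) auto
  thus False using X_f assms by simp
qed

lemma f_bij: "bij_betw f {0<..} {0<..<1}"
proof (rule bij_betw_imageI)
  show "inj_on f {0<..}"
    by (rule inj_onI) (metis X_f greaterThan_iff)
  show "f ` {0<..} = {0<..<1}"
  proof safe
    fix y :: real assume "y \<in> {0<..<1}"
    thus "y \<in> f ` {0<..}" using f_X X_pos by (intro image_eqI[of _ _ "X y"]) auto
  qed (use f0 f1 in auto)
qed

lemma part2: "x > 0 \<Longrightarrow> f x \<le> (c / x) powr \<sigma>"
proof -
  assume x: "x > 0"
  have y: "0 < f x" "f x < 1" using f0 f1 x by auto
  have d: "0 < (1 - (f x)\<^sup>2)\<^sup>2" "(1 - (f x)\<^sup>2)\<^sup>2 \<le> 1"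
    using y sq_lt1[of "f x"] by (auto simp: power_le_one)
  have "f x = (c / x) powr \<sigma> * (1 - (f x)\<^sup>2)\<^sup>2"
    using feq x d by (auto simp: field_simps)
  also have "\<dots> \<le> (c / x) powr \<sigma> * 1" using d by (intro mult_left_mono) auto
  finally show ?thesis by simp
qed

lemma xc_half: assumes x: "x > 0" shows "(x / c) powr (\<sigma>/2) = (1 - (f x)\<^sup>2) / sqrt (f x)"
proof -
  have y: "0 < f x" "f x < 1" using f0 f1 x by auto
  have "(x / c) powr (\<sigma>/2) = ((x / c) powr \<sigma>) powr (1/2)"
    using x cpos by (simp add: powr_powr)
  also have "\<dots> = sqrt ((1 - (f x)\<^sup>2)\<^sup>2 / f x)" using xc_pow[OF x] y by (simp add: powr_half_sqrt)
  also have "\<dots> = (1 - (f x)\<^sup>2) / sqrt (f x)"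
    using y sq_lt1[of "f x"] by (simp add: real_sqrt_divide)
  finally show ?thesis .
qed

lemma part3: assumes x: "x > 0"
  shows "min (1/2) (1/4 * (x / c) powr (\<sigma>/2)) \<le> 1 - f x \<and> 1 - f x \<le> (x / c) powr (\<sigma>/2)"
proof -
  define y where "y = f x"
  have y: "0 < y" "y < 1" using f0 f1 x by (auto simp: y_def)
  have e: "(x / c) powr (\<sigma>/2) = (1 - y) * (1 + y) / sqrt y"
    using xc_half[OF x] by (simp add: y_def power2_eq_square algebra_simps)
  have sy: "0 < sqrt y" "sqrt y < 1" using y by auto
  have up: "1 - y \<le> (1 - y) * (1 + y) / sqrt y"
  proof -
    have "sqrt y \<le> 1 + y" using sy y by linarith
    hence "(1 - y) * sqrt y \<le> (1 - y) * (1 + y)" using y by (intro mult_left_mono) auto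
    thus ?thesis using sy by (simp add: field_simps)
  qed
  have low: "min (1/2) (1/4 * ((1 - y) * (1 + y) / sqrt y)) \<le> 1 - y"
  proof (cases "y \<le> 1/2")
    case True thus ?thesis by (simp add: min_le_iff_disj)
  next
    case False
    hence "sqrt (1/4) < sqrt y" by (intro real_sqrt_less_mono) auto
    moreover have "sqrt (1/4) = (1/2::real)" by (simp add: real_sqrt_divide)
    ultimately have "sqrt y > 1/2" by simp
    hence "1 + y \<le> 4 * sqrt y" using y by linarith
    hence "(1 - y) * (1 + y) \<le> (1 - y) * (4 * sqrt y)" using y by (intro mult_left_mono) auto
    hence "1/4 * ((1 - y) * (1 + y) / sqrt y) \<le> 1 - y" using sy by (simp add: field_simps)
    thus ?thesis by (simp add: min_le_iff_disj)
  qed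
  show ?thesis unfolding e y_def[symmetric] using up low by simp
qed

definition Y where "Y v = c * exp ((2 * ln (1 - v) - ln v / 2) / \<sigma>)"
definition D where "D v = - Y v * (1 + 3 * v) / (2 * \<sigma> * v * (1 - v))"

lemma Y_X: assumes "0 < v" "v < 1" shows "Y v = X (sqrt v)"
proof -
  have sv: "0 < sqrt v" "sqrt v < 1" "(sqrt v)\<^sup>2 = v" using assms by auto
  have w: "(1 - v)\<^sup>2 / sqrt v > 0" using assms by auto
  have "ln ((1 - v)\<^sup>2 / sqrt v) = 2 * ln (1 - v) - ln v / 2"
    using assms by (simp add: ln_div ln_realpow ln_sqrt)
  hence "((1 - v)\<^sup>2 / sqrt v) powr (1/\<sigma>) = exp ((2 * ln (1 - v) - ln v / 2) / \<sigma>)"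
    using w assms by (simp add: powr_def)
  thus ?thesis unfolding X_def Y_def sv(3) by simp
qed

lemma f_Y: "0 < v \<Longrightarrow> v < 1 \<Longrightarrow> f (Y v) = sqrt v"
  using Y_X f_X by simp

lemma Y_pos: "Y v > 0" unfolding Y_def using cpos by simp

lemma Y_deriv: assumes "0 < v" "v < 1" shows "(Y has_field_derivative D v) (at v within S)"
proof -
  have "(Y has_field_derivative Y v * ((2 * (-1 / (1 - v)) - (1 / v) / 2) / \<sigma>)) (at v within S)"
    unfolding Y_def using assms \<sigma>pos
    by (auto intro!: derivative_eq_intros)
  moreover have "Y v * ((2 * (-1 / (1 - v)) - (1 / v) / 2) / \<sigma>) = D v"
    unfolding D_def using assms \<sigma>pos by (simp add: field_simps)
  ultimately show ?thesis by simp
qed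

lemma Y_inj: "inj_on Y {0<..<1}"
proof (rule inj_onI)
  fix u v :: real assume u: "u \<in> {0<..<1}" and v: "v \<in> {0<..<1}" and e: "Y u = Y v"
  have "sqrt u = sqrt v" using e Y_X u v X_inj[of "sqrt u" "sqrt v"] by auto
  thus "u = v" by simp
qed

lemma Y_img: "Y ` {0<..<1} = {0<..}"
proof
  show "Y ` {0<..<1} \<subseteq> {0<..}" using Y_pos by auto
  show "{0<..} \<subseteq> Y ` {0<..<1}"
  proof
    fix x :: real assume x: "x \<in> {0<..}"
    have "Y ((f x)\<^sup>2) = X (sqrt ((f x)\<^sup>2))" using Y_X[of "(f x)\<^sup>2"] f0[of x] f1[of x] x sq_lt1[of "f x"] by simp
    also have "sqrt ((f x)\<^sup>2) = f x" using f0[of x] x by simp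
    finally have "Y ((f x)\<^sup>2) = X (f x)" .
    moreover have "(f x)\<^sup>2 \<in> {0<..<1}" using f0[of x] f1[of x] x sq_lt1[of "f x"] by auto
    moreover have "X (f x) = x" using X_f x by auto
    ultimately show "x \<in> Y ` {0<..<1}" by (metis image_eqI)
  qed
qed

lemma kern:
  assumes v: "0 < v" "v < 1"
  shows "complex_of_real \<bar>D v\<bar> * of_real (Y v) powr (s - 1) =
     of_real c powr s * of_real ((1 + 3 * v) / (2 * \<sigma>)) *
       (of_real v powr (- s / (2 * of_real \<sigma>) - 1) * of_real (1 - v) powr (2 * s / of_real \<sigma> - 1))"
proof -
  have v1: "1 - v > 0" using v by simp
  define L0 where "L0 = ln v"
  define L1 where "L1 = ln (1 - v)"
  have lnY: "ln (Y v) = ln c + (2 * L1 - L0 / 2) / \<sigma>"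
    unfolding Y_def L0_def L1_def using cpos by (simp add: ln_mult)
  have absD: "\<bar>D v\<bar> = ((1 + 3 * v) / (2 * \<sigma>)) * exp (ln (Y v) - L0 - L1)"
  proof -
    have "exp (ln (Y v) - L0 - L1) = Y v / (v * (1 - v))"
      unfolding L0_def L1_def using v Y_pos by (simp add: exp_diff)
    moreover have "\<bar>D v\<bar> = Y v * (1 + 3 * v) / (2 * \<sigma> * v * (1 - v))"
    proof -
      have "Y v * (1 + 3 * v) / (2 * \<sigma> * v * (1 - v)) > 0" using v Y_pos[of v] \<sigma>pos by simp
      hence "\<bar>- Y v * (1 + 3 * v) / (2 * \<sigma> * v * (1 - v))\<bar> = Y v * (1 + 3 * v) / (2 * \<sigma> * v * (1 - v))"
        by (simp only: mult_minus_left minus_divide_left abs_minus_cancel abs_of_pos)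
      thus ?thesis unfolding D_def .
    qed
    ultimately show ?thesis by (simp add: field_simps)
  qed
  have "complex_of_real \<bar>D v\<bar> * of_real (Y v) powr (s - 1) =
        of_real ((1 + 3 * v) / (2 * \<sigma>)) * exp (of_real (ln (Y v) - L0 - L1) + (s - 1) * of_real (ln (Y v)))"
    unfolding absD cpow_real[OF Y_pos] by (simp add: exp_add flip: exp_of_real)
  also have "of_real (ln (Y v) - L0 - L1) + (s - 1) * of_real (ln (Y v)) =
      s * of_real (ln c) + ((- s / (2 * of_real \<sigma>) - 1) * of_real L0 + (2 * s / of_real \<sigma> - 1) * of_real L1)"
    unfolding lnY using \<sigma>pos by (simp add: field_simps)
  also have "exp \<dots> = of_real c powr s * (of_real v powr (- s / (2 * of_real \<sigma>) - 1) * of_real (1 - v) powr (2 * s / of_real \<sigma> - 1))"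
    using v unfolding cpow_real[OF cpos] cpow_real[OF v(1)] cpow_real[OF v1] L0_def L1_def
    by (simp add: cpow_real exp_add mult.commute)
  finally show ?thesis by (simp add: mult_ac)
qed

lemma mellin_general:
  fixes K :: "real \<Rightarrow> complex"
  assumes Kc: "continuous_on {0<..<1} K"
    and A: "(\<lambda>v. K (sqrt v) * (of_real c powr s * of_real ((1 + 3 * v) / (2 * \<sigma>)) *
       (of_real v powr (- s / (2 * of_real \<sigma>) - 1) * of_real (1 - v) powr (2 * s / of_real \<sigma> - 1))))
       absolutely_integrable_on {0<..<1} \<and>
      integral {0<..<1} (\<lambda>v. K (sqrt v) * (of_real c powr s * of_real ((1 + 3 * v) / (2 * \<sigma>)) *
       (of_real v powr (- s / (2 * of_real \<sigma>) - 1) * of_real (1 - v) powr (2 * s / of_real \<sigma> - 1)))) = b"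
  shows "set_integrable lborel {0<..} (\<lambda>x. K (f x) * of_real x powr (s - 1)) \<and>
         (LINT x:{0<..}|lborel. K (f x) * of_real x powr (s - 1)) = b"
proof -
  define F where "F x = K (f x) * of_real x powr (s - 1)" for x
  have der: "\<And>v. v \<in> {0<..<1} \<Longrightarrow> (Y has_field_derivative D v) (at v within {0<..<1})"
    using Y_deriv by auto
  have e: "\<bar>D v\<bar> *\<^sub>R F (Y v) = K (sqrt v) * (of_real c powr s * of_real ((1 + 3 * v) / (2 * \<sigma>)) *
       (of_real v powr (- s / (2 * of_real \<sigma>) - 1) * of_real (1 - v) powr (2 * s / of_real \<sigma> - 1)))"
    if v: "v \<in> {0<..<1}" for v
  proof -
    have "\<bar>D v\<bar> *\<^sub>R F (Y v) = K (sqrt v) * (complex_of_real \<bar>D v\<bar> * of_real (Y v) powr (s - 1))"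
      unfolding F_def using v f_Y by (simp add: scaleR_conv_of_real mult_ac)
    thus ?thesis using kern[of v s] v by simp
  qed
  have c1: "set_integrable lebesgue {0<..<1} (\<lambda>v. \<bar>D v\<bar> *\<^sub>R F (Y v)) = set_integrable lebesgue {0<..<1} (\<lambda>v. K (sqrt v) * (of_real c powr s * of_real ((1 + 3 * v) / (2 * \<sigma>)) *
       (of_real v powr (- s / (2 * of_real \<sigma>) - 1) * of_real (1 - v) powr (2 * s / of_real \<sigma> - 1))))"
    by (intro set_integrable_cong refl e)
  have c2: "integral {0<..<1} (\<lambda>v. \<bar>D v\<bar> *\<^sub>R F (Y v)) = integral {0<..<1} (\<lambda>v. K (sqrt v) * (of_real c powr s * of_real ((1 + 3 * v) / (2 * \<sigma>)) *
       (of_real v powr (- s / (2 * of_real \<sigma>) - 1) * of_real (1 - v) powr (2 * s / of_real \<sigma> - 1))))"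
    by (intro integral_cong e)
  from has_absolute_integral_change_of_variables_real[OF _ der Y_inj, of F b] A
  have FI: "F absolutely_integrable_on {0<..} \<and> integral {0<..} F = b"
    unfolding c1 c2 Y_img by simp
  have cont: "continuous_on {0<..} F"
  proof -
    have "continuous_on {0<..} (\<lambda>x. K (f x))"
      by (rule continuous_on_compose2[OF Kc fcont]) (use f0 f1 in auto)
    thus ?thesis unfolding F_def by (intro continuous_intros) auto
  qed
  have m: "(\<lambda>x. indicator {0<..} x *\<^sub>R F x) \<in> borel_measurable borel"
    by (intro borel_measurable_continuous_on_indicator cont) auto
  from FI abs_int_to_lborel[OF _ m] show ?thesis unfolding F_def by auto
qed

lemma alg1: "(a / (2 * x)) * (y * z / g) * (2 / P) = a * (1 / x) * (y * z / (P * g))" for a x y z g P :: complex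
  by (cases "x = 0"; cases "g = 0"; cases "P = 0"; simp add: field_simps)

lemma alg2: "a * (q / (2 * s)) * (y * z / (P * g)) = a / (2 * s) * (y * (q * z) / (P * g))" for a q s y z g P :: complex
  by (simp add: field_simps)

lemma mellin_f:
  assumes s1: "0 < Re s" and s2: "Re s < \<sigma>"
  shows "set_integrable lborel {0<..} (\<lambda>x. complex_of_real (f x) * complex_of_real x powr (s - 1)) \<and>
       (LINT x:{0<..}|lborel. complex_of_real (f x) * complex_of_real x powr (s - 1)) =
         complex_of_real c powr s / (2 * s) *
         (Gamma (1/2 - s / (2 * complex_of_real \<sigma>)) * Gamma (2 * s / complex_of_real \<sigma> + 1) / Gamma (3/2 + 3 * s / (2*complex_of_real \<sigma>)))"
proof -
  define p where "p = 1/2 - s / (2 * complex_of_real \<sigma>)"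
  define q where "q = 2 * s / complex_of_real \<sigma>"
  define C where "C = of_real c powr s / (2 * complex_of_real \<sigma>)"
  have sp: "\<sigma> > 0" using \<sigma>pos .
  have Rp: "Re p > 0" unfolding p_def using sp s2 by (simp add: field_simps)
  have Rq: "Re q > 0" unfolding q_def using sp s1 by (simp add: field_simps)
  note BP = beta_plus3[OF Rp Rq]
  have A1: "(\<lambda>v. C * (of_real (1 + 3 * v) * (of_real v powr (p - 1) * of_real (1 - v) powr (q - 1)))) absolutely_integrable_on {0<..<1}"
    using BP by (intro set_integrable_mult_right) auto
  have A2: "integral {0<..<1} (\<lambda>v. C * (of_real (1 + 3 * v) * (of_real v powr (p - 1) * of_real (1 - v) powr (q - 1))))
     = C * (Beta p q + 3 * Beta (p + 1) q)"
    using BP by (simp add: integral_mult_right)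
  have e: "complex_of_real (sqrt v) * (of_real c powr s * of_real ((1 + 3 * v) / (2 * \<sigma>)) *
       (of_real v powr (- s / (2 * of_real \<sigma>) - 1) * of_real (1 - v) powr (2 * s / of_real \<sigma> - 1)))
     = C * (of_real (1 + 3 * v) * (of_real v powr (p - 1) * of_real (1 - v) powr (q - 1)))"
    if v: "v \<in> {0<..<1}" for v
  proof -
    have v0: "v > 0" using v by simp
    have "complex_of_real (sqrt v) = exp (of_real (ln v) / 2)"
    proof -
      have "exp (ln v / 2) = sqrt v" using v0 by (simp add: ln_sqrt[symmetric])
      moreover have "exp (complex_of_real (ln v) / 2) = of_real (exp (ln v / 2))"
        by (metis exp_of_real of_real_divide of_real_numeral)
      ultimately show ?thesis by simp
    qed
    hence hP: "complex_of_real (sqrt v) * of_real v powr (- s / (2 * of_real \<sigma>) - 1) = of_real v powr (p - 1)"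
      unfolding cpow_real[OF v0] p_def by (simp add: exp_add[symmetric] algebra_simps)
    have qq: "2 * s / of_real \<sigma> - 1 = q - 1" unfolding q_def ..
    have sc: "complex_of_real \<sigma> \<noteq> 0" using sp by simp
    show ?thesis unfolding C_def hP[symmetric] qq[symmetric] using sc
      by (simp only: of_real_divide of_real_mult of_real_add of_real_numeral of_real_1) (simp add: field_simps)
  qed
  have "set_integrable lborel {0<..} (\<lambda>x. complex_of_real (f x) * of_real x powr (s - 1)) \<and>
         (LINT x:{0<..}|lborel. complex_of_real (f x) * of_real x powr (s - 1)) = C * (Beta p q + 3 * Beta (p + 1) q)"
  proof (rule mellin_general)
    show "continuous_on {0<..<1} complex_of_real" by (intro continuous_intros)
    have c1: "integral {0<..<1} (\<lambda>v. complex_of_real (sqrt v) * (of_real c powr s * of_real ((1 + 3 * v) / (2 * \<sigma>)) *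
       (of_real v powr (- s / (2 * of_real \<sigma>) - 1) * of_real (1 - v) powr (2 * s / of_real \<sigma> - 1)))) =
       integral {0<..<1} (\<lambda>v. C * (of_real (1 + 3 * v) * (of_real v powr (p - 1) * of_real (1 - v) powr (q - 1))))"
      by (intro integral_cong e)
    have c2: "set_integrable lebesgue {0<..<1} (\<lambda>v. complex_of_real (sqrt v) * (of_real c powr s * of_real ((1 + 3 * v) / (2 * \<sigma>)) *
       (of_real v powr (- s / (2 * of_real \<sigma>) - 1) * of_real (1 - v) powr (2 * s / of_real \<sigma> - 1)))) =
       set_integrable lebesgue {0<..<1} (\<lambda>v. C * (of_real (1 + 3 * v) * (of_real v powr (p - 1) * of_real (1 - v) powr (q - 1))))"
      by (intro set_integrable_cong refl e)
    show "(\<lambda>v. complex_of_real (sqrt v) * (of_real c powr s * of_real ((1 + 3 * v) / (2 * \<sigma>)) *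
       (of_real v powr (- s / (2 * of_real \<sigma>) - 1) * of_real (1 - v) powr (2 * s / of_real \<sigma> - 1))))
       absolutely_integrable_on {0<..<1} \<and>
      integral {0<..<1} (\<lambda>v. complex_of_real (sqrt v) * (of_real c powr s * of_real ((1 + 3 * v) / (2 * \<sigma>)) *
       (of_real v powr (- s / (2 * of_real \<sigma>) - 1) * of_real (1 - v) powr (2 * s / of_real \<sigma> - 1)))) = C * (Beta p q + 3 * Beta (p + 1) q)"
      unfolding c1 c2 using A1 A2 by blast
  qed
  moreover have "C * (Beta p q + 3 * Beta (p + 1) q) = complex_of_real c powr s / (2 * s) *
         (Gamma (1/2 - s / (2 * complex_of_real \<sigma>)) * Gamma (2 * s / complex_of_real \<sigma> + 1) / Gamma (3/2 + 3 * s / (2*complex_of_real \<sigma>)))"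
  proof -
    have pq: "Re (p + q) > 0" using Rp Rq by simp
    have pnz: "p \<notin> \<int>\<^sub>\<le>\<^sub>0" "q \<notin> \<int>\<^sub>\<le>\<^sub>0" "p + q \<notin> \<int>\<^sub>\<le>\<^sub>0"
      using Rp Rq pq by (auto intro!: Re_pos_not_nonpos_Ints)
    have pq0: "p + q \<noteq> 0"
    proof
      assume "p + q = 0"
      hence "Re (p + q) = 0" by simp
      with pq show False by linarith
    qed
    have s0: "s \<noteq> 0" using s1 by auto
    have G0: "Gamma (p + q) \<noteq> 0" by (rule Gamma_Re_pos_nz[OF pq])
    have b1: "Beta (p + 1) q = p * Beta p q / (p + q)"
      using Beta_plus1_left[OF pnz(1), of q] pq0 by (simp add: field_simps)
    have a1: "1/2 - s / (2 * complex_of_real \<sigma>) = p" unfolding p_def ..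
    have a2: "2 * s / complex_of_real \<sigma> + 1 = q + 1" unfolding q_def ..
    have a3: "3/2 + 3 * s / (2*complex_of_real \<sigma>) = (p + q) + 1" unfolding p_def q_def by (simp add: field_simps)
    have four: "4 * p + q = 2" unfolding p_def q_def using sp by (simp add: field_simps)
    have qs: "q / (2 * s) = 1 / of_real \<sigma>" unfolding q_def using sp s0 by (simp add: field_simps)
    have "C * (Beta p q + 3 * Beta (p + 1) q) = C * Beta p q * ((4 * p + q) / (p + q))"
      unfolding b1 using pq0 by (simp add: field_simps)
    also have "\<dots> = C * Beta p q * (2 / (p + q))" unfolding four ..
    also have "\<dots> = complex_of_real c powr s * (1 / of_real \<sigma>) * (Gamma p * Gamma q / ((p + q) * Gamma (p + q)))"
      unfolding C_def Beta_def by (rule alg1)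
    also have "\<dots> = complex_of_real c powr s * (q / (2 * s)) * (Gamma p * Gamma q / ((p + q) * Gamma (p + q)))"
      unfolding qs ..
    also have "\<dots> = complex_of_real c powr s / (2 * s) * (Gamma p * (q * Gamma q) / ((p + q) * Gamma (p + q)))"
      by (rule alg2)
    also have "\<dots> = complex_of_real c powr s / (2 * s) *
         (Gamma (1/2 - s / (2 * complex_of_real \<sigma>)) * Gamma (2 * s / complex_of_real \<sigma> + 1) / Gamma (3/2 + 3 * s / (2*complex_of_real \<sigma>)))"
      unfolding a1 a2 a3 Gamma_plus1[OF pnz(2)] Gamma_plus1[OF pnz(3)] ..
    finally show ?thesis .
  qed
  ultimately show ?thesis by simp
qed

lemma cpow_shift: "x > 0 \<Longrightarrow> complex_of_real x powr a = of_real x * of_real x powr (a - 1)"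
proof -
  assume x: "x > 0"
  have "complex_of_real x = exp (of_real (ln x))" using x by (simp add: exp_of_real)
  thus ?thesis unfolding cpow_real[OF x] by (simp add: exp_add[symmetric] algebra_simps)
qed

lemma mellin_g:
  assumes s1: "\<sigma>/2 < Re s" and s2: "Re s < 2*\<sigma>"
  shows "set_integrable lborel {0<..}
         (\<lambda>x. complex_of_real ((f x)\<^sup>2 / (1 - (f x)\<^sup>2)) * complex_of_real x powr (s - 1)) \<and>
       (LINT x:{0<..}|lborel. complex_of_real ((f x)\<^sup>2 / (1 - (f x)\<^sup>2)) * complex_of_real x powr (s - 1)) =
         complex_of_real c powr s / s *
         (Gamma (1 - s / (2 * complex_of_real \<sigma>)) * Gamma (2 * s / complex_of_real \<sigma> - 1) / Gamma (3 * s / (2*complex_of_real \<sigma>)))"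
proof -
  define p where "p = 1 - s / (2 * complex_of_real \<sigma>)"
  define q where "q = 2 * s / complex_of_real \<sigma> - 1"
  define C where "C = of_real c powr s / (2 * complex_of_real \<sigma>)"
  define K where "K y = complex_of_real (y\<^sup>2 / (1 - y\<^sup>2))" for y :: real
  have sp: "\<sigma> > 0" using \<sigma>pos .
  have sc: "complex_of_real \<sigma> \<noteq> 0" using sp by simp
  have Rp: "Re p > 0" unfolding p_def using sp s2 by (simp add: field_simps)
  have Rq: "Re q > 0" unfolding q_def using sp s1 by (simp add: field_simps)
  note BP = beta_plus3[OF Rp Rq]
  have A1: "(\<lambda>v. C * (of_real (1 + 3 * v) * (of_real v powr (p - 1) * of_real (1 - v) powr (q - 1)))) absolutely_integrable_on {0<..<1}"
    using BP by (intro set_integrable_mult_right) auto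
  have A2: "integral {0<..<1} (\<lambda>v. C * (of_real (1 + 3 * v) * (of_real v powr (p - 1) * of_real (1 - v) powr (q - 1))))
     = C * (Beta p q + 3 * Beta (p + 1) q)"
    using BP by (simp add: integral_mult_right)
  have e: "K (sqrt v) * (of_real c powr s * of_real ((1 + 3 * v) / (2 * \<sigma>)) *
       (of_real v powr (- s / (2 * of_real \<sigma>) - 1) * of_real (1 - v) powr (2 * s / of_real \<sigma> - 1)))
     = C * (of_real (1 + 3 * v) * (of_real v powr (p - 1) * of_real (1 - v) powr (q - 1)))"
    if v: "v \<in> {0<..<1}" for v
  proof -
    have v0: "v > 0" and v1: "1 - v > 0" using v by auto
    have hK: "K (sqrt v) = of_real v / of_real (1 - v)" unfolding K_def using v0 by simp
    have h1: "of_real v * of_real v powr (- s / (2 * of_real \<sigma>) - 1) = of_real v powr (p - 1)"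
    proof -
      have "p - 1 - 1 = - s / (2 * of_real \<sigma>) - 1" unfolding p_def by simp
      thus ?thesis using cpow_shift[OF v0, of "p - 1"] by simp
    qed
    have h2: "of_real (1 - v) powr (2 * s / of_real \<sigma> - 1) = of_real (1 - v) * of_real (1 - v) powr (q - 1)"
    proof -
      have "2 * s / of_real \<sigma> - 1 - 1 = q - 1" unfolding q_def by simp
      thus ?thesis using cpow_shift[OF v1, of "2 * s / of_real \<sigma> - 1"] by simp
    qed
    have nz: "complex_of_real (1 - v) \<noteq> 0" using v1 by (simp only: of_real_eq_0_iff)
    show ?thesis unfolding C_def hK h2 h1[symmetric] using sc nz
      by (simp only: of_real_divide of_real_mult of_real_add of_real_numeral of_real_1) (simp add: field_simps)
  qed
  have "set_integrable lborel {0<..} (\<lambda>x. K (f x) * of_real x powr (s - 1)) \<and>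
         (LINT x:{0<..}|lborel. K (f x) * of_real x powr (s - 1)) = C * (Beta p q + 3 * Beta (p + 1) q)"
  proof (rule mellin_general)
    show "continuous_on {0<..<1} K" unfolding K_def
      by (intro continuous_intros) (use sq_lt1 in fastforce)
    have c1: "integral {0<..<1} (\<lambda>v. K (sqrt v) * (of_real c powr s * of_real ((1 + 3 * v) / (2 * \<sigma>)) *
       (of_real v powr (- s / (2 * of_real \<sigma>) - 1) * of_real (1 - v) powr (2 * s / of_real \<sigma> - 1)))) =
       integral {0<..<1} (\<lambda>v. C * (of_real (1 + 3 * v) * (of_real v powr (p - 1) * of_real (1 - v) powr (q - 1))))"
      by (intro integral_cong e)
    have c2: "set_integrable lebesgue {0<..<1} (\<lambda>v. K (sqrt v) * (of_real c powr s * of_real ((1 + 3 * v) / (2 * \<sigma>)) *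
       (of_real v powr (- s / (2 * of_real \<sigma>) - 1) * of_real (1 - v) powr (2 * s / of_real \<sigma> - 1)))) =
       set_integrable lebesgue {0<..<1} (\<lambda>v. C * (of_real (1 + 3 * v) * (of_real v powr (p - 1) * of_real (1 - v) powr (q - 1))))"
      by (intro set_integrable_cong refl e)
    show "(\<lambda>v. K (sqrt v) * (of_real c powr s * of_real ((1 + 3 * v) / (2 * \<sigma>)) *
       (of_real v powr (- s / (2 * of_real \<sigma>) - 1) * of_real (1 - v) powr (2 * s / of_real \<sigma> - 1))))
       absolutely_integrable_on {0<..<1} \<and>
      integral {0<..<1} (\<lambda>v. K (sqrt v) * (of_real c powr s * of_real ((1 + 3 * v) / (2 * \<sigma>)) *
       (of_real v powr (- s / (2 * of_real \<sigma>) - 1) * of_real (1 - v) powr (2 * s / of_real \<sigma> - 1)))) = C * (Beta p q + 3 * Beta (p + 1) q)"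
      unfolding c1 c2 using A1 A2 by blast
  qed
  moreover have "C * (Beta p q + 3 * Beta (p + 1) q) = complex_of_real c powr s / s *
         (Gamma (1 - s / (2 * complex_of_real \<sigma>)) * Gamma (2 * s / complex_of_real \<sigma> - 1) / Gamma (3 * s / (2*complex_of_real \<sigma>)))"
  proof -
    have pq: "Re (p + q) > 0" using Rp Rq by simp
    have pnz: "p \<notin> \<int>\<^sub>\<le>\<^sub>0"
      using Rp by (auto intro!: Re_pos_not_nonpos_Ints)
    have pq0: "p + q \<noteq> 0"
    proof
      assume "p + q = 0"
      hence "Re (p + q) = 0" by simp
      with pq show False by linarith
    qed
    have s0: "s \<noteq> 0" using s1 sp by auto
    have b1: "Beta (p + 1) q = p * Beta p q / (p + q)"
      using Beta_plus1_left[OF pnz, of q] pq0 by (simp add: field_simps)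
    have a3: "3 * s / (2*complex_of_real \<sigma>) = p + q" unfolding p_def q_def by (simp add: field_simps)
    have four: "4 * p + q = 3" unfolding p_def q_def using sp by (simp add: field_simps)
    have "C * (Beta p q + 3 * Beta (p + 1) q) = C * Beta p q * ((4 * p + q) / (p + q))"
      unfolding b1 using pq0 by (simp add: field_simps)
    also have "\<dots> = C * Beta p q * (3 / (3 * s / (2*complex_of_real \<sigma>)))" unfolding four a3 ..
    also have "\<dots> = complex_of_real c powr s / s * Beta p q"
      unfolding C_def using sc s0 by (simp add: field_simps)
    also have "\<dots> = complex_of_real c powr s / s *
         (Gamma (1 - s / (2 * complex_of_real \<sigma>)) * Gamma (2 * s / complex_of_real \<sigma> - 1) / Gamma (3 * s / (2*complex_of_real \<sigma>)))"
      unfolding Beta_def a3 p_def q_def ..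
    finally show ?thesis .
  qed
  ultimately show ?thesis unfolding K_def by simp
qed

definition Xe where "Xe y = c * exp ((2 * ln (1 - y * y) - ln y) / \<sigma>)"

lemma X_Xe: assumes "0 < y" "y < 1" shows "X y = Xe y"
proof -
  have a: "0 < 1 - y * y" using sq_lt1[OF assms] by (simp add: power2_eq_square)
  have a2: "0 < 1 - y\<^sup>2" using sq_lt1[OF assms] by simp
  have "ln ((1 - y\<^sup>2)\<^sup>2 / y) = 2 * ln (1 - y\<^sup>2) - ln y"
    using assms a2 by (simp add: ln_div ln_realpow)
  hence "ln ((1 - y\<^sup>2)\<^sup>2 / y) = 2 * ln (1 - y * y) - ln y" by (simp add: power2_eq_square)
  moreover have "(1 - y\<^sup>2)\<^sup>2 / y > 0" using w_pos assms by auto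
  ultimately show ?thesis unfolding X_def Xe_def using assms sq_lt1[OF assms] by (simp add: powr_def)
qed

lemma Xe_f: "x > 0 \<Longrightarrow> Xe (f x) = x"
  using X_f X_Xe f0 f1 by metis

lemma Xe_smooth: "smooth_n n {0<..<1} Xe"
proof -
  have o: "open {0<..<1::real}" by auto
  have sq: "\<And>y. y \<in> {0<..<1::real} \<Longrightarrow> 1 + (-1) * (y * y) \<in> {0<..}"
    using sq_lt1 by (auto simp: power2_eq_square)
  have inner: "smooth_n n {0<..<1} (\<lambda>y. 1 + (-1) * (y * y))"
    by (rule smooth_n_add[OF o smooth_n_const smooth_n_mult[OF o smooth_n_const smooth_n_mult[OF o smooth_n_id smooth_n_id]]])
  have s1: "smooth_n n {0<..<1} (\<lambda>y. ln (1 + (-1) * (y * y)))"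
    using smooth_n_comp[OF o sq smooth_n_ln inner] .
  have s2: "smooth_n n {0<..<1} (\<lambda>y. ln y)"
    by (rule smooth_n_subset[OF smooth_n_ln]) auto
  have inner2: "smooth_n n {0<..<1} (\<lambda>y. (1/\<sigma>) * (2 * ln (1 + (-1) * (y * y)) + (-1) * ln y))"
    by (rule smooth_n_mult[OF o smooth_n_const smooth_n_add[OF o smooth_n_mult[OF o smooth_n_const s1] smooth_n_mult[OF o smooth_n_const s2]]])
  have s3: "smooth_n n {0<..<1} (\<lambda>y. exp ((1/\<sigma>) * (2 * ln (1 + (-1) * (y * y)) + (-1) * ln y)))"
    using smooth_n_comp[OF o _ smooth_n_exp inner2, where T = UNIV] by simp
  have "smooth_n n {0<..<1} (\<lambda>y. c * exp ((1/\<sigma>) * (2 * ln (1 + (-1) * (y * y)) + (-1) * ln y)))"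
    by (rule smooth_n_mult[OF o smooth_n_const s3])
  moreover have "(\<lambda>y. c * exp ((1/\<sigma>) * (2 * ln (1 + (-1) * (y * y)) + (-1) * ln y))) = Xe"
    unfolding Xe_def by (simp add: field_simps fun_eq_iff)
  ultimately show ?thesis by simp
qed

lemma Xe_deriv: assumes "0 < y" "y < 1"
  shows "(Xe has_real_derivative Xe y * ((2 * (- (2 * y) / (1 - y * y)) - 1 / y) / \<sigma>)) (at y)"
proof -
  have a: "0 < 1 - y * y" using sq_lt1[OF assms] by (simp add: power2_eq_square)
  have "((\<lambda>y. (2 * ln (1 - y * y) - ln y) / \<sigma>) has_real_derivative ((2 * (- (2 * y) / (1 - y * y)) - 1 / y) / \<sigma>)) (at y)"
    using assms a \<sigma>pos by (auto intro!: derivative_eq_intros simp: divide_simps)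
  from DERIV_cmult[OF DERIV_fun_exp[OF this], of c]
  show ?thesis unfolding Xe_def by (simp add: mult_ac)
qed

lemma Xe_deriv_neg: assumes "0 < y" "y < 1" shows "deriv Xe y < 0"
proof -
  have a: "0 < 1 - y * y" using sq_lt1[OF assms] by (simp add: power2_eq_square)
  have "deriv Xe y = Xe y * ((2 * (- (2 * y) / (1 - y * y)) - 1 / y) / \<sigma>)"
    using Xe_deriv[OF assms] by (rule DERIV_imp_deriv)
  moreover have "Xe y > 0" unfolding Xe_def using cpos by simp
  moreover have "(2 * (- (2 * y) / (1 - y * y)) - 1 / y) / \<sigma> < 0"
  proof -
    have "2 * y / (1 - y * y) > 0" "1 / y > 0" using assms a by auto
    moreover have "- (2 * y) / (1 - y * y) = - (2 * y / (1 - y * y))" by (rule minus_divide_left[symmetric])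
    ultimately have "2 * (- (2 * y) / (1 - y * y)) - 1 / y < 0" by linarith
    thus ?thesis using \<sigma>pos by (simp add: divide_neg_pos)
  qed
  ultimately show ?thesis by (metis mult_pos_neg)
qed

lemma f_deriv: assumes x: "x > 0" shows "(f has_real_derivative inverse (deriv Xe (f x))) (at x)"
proof (rule DERIV_inverse_function[where f = Xe and a = 0 and b = "x + 1"])
  have y: "0 < f x" "f x < 1" using f0 f1 x by auto
  show "(Xe has_real_derivative deriv Xe (f x)) (at (f x))"
    using Xe_deriv[OF y] by (simp add: DERIV_imp_deriv)
  show "deriv Xe (f x) \<noteq> 0" using Xe_deriv_neg[OF y] by simp
  show "0 < x" "x < x + 1" using x by auto
  show "\<And>y. 0 < y \<Longrightarrow> y < x + 1 \<Longrightarrow> Xe (f y) = y" using Xe_f by auto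
  show "isCont f x" using fcont x by (simp add: continuous_on_eq_continuous_at)
qed

lemma f_smooth_n: "smooth_n n {0<..} f"
proof (induction n)
  case 0 show ?case unfolding smooth_n_0 using f_deriv real_differentiable_def by auto
next
  case (Suc n)
  have o: "open ({0<..}::real set)" and o1: "open {0<..<1::real}" by auto
  have d1: "smooth_n n {0<..<1} (deriv Xe)" using Xe_smooth[of "Suc n"] unfolding smooth_n_Suc by simp
  have phi: "smooth_n n {0<..<1} (\<lambda>y. inverse (deriv Xe y))"
    using smooth_n_comp[OF o1 _ smooth_n_inverse d1] Xe_deriv_neg by fastforce
  have "smooth_n n {0<..} (\<lambda>x. inverse (deriv Xe (f x)))"
    by (rule smooth_n_comp[OF o _ phi Suc.IH]) (use f0 f1 in auto)
  moreover have "inverse (deriv Xe (f x)) = deriv f x" if "x \<in> {0<..}" for x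
    using f_deriv[of x] that by (simp add: DERIV_imp_deriv)
  ultimately have "smooth_n n {0<..} (deriv f)"
    using smooth_n_local[OF o, of "\<lambda>x. inverse (deriv Xe (f x))" "deriv f"] by blast
  thus ?case unfolding smooth_n_Suc using f_deriv real_differentiable_def by auto
qed

lemma f_smooth: "smooth_on_real {0<..} f"
  unfolding smooth_on_real_def using f_smooth_n unfolding smooth_n_def by blast

lemma c_eq:
  assumes fint: "((\<lambda>x. (f x)\<^sup>2 / (1 - (f x)\<^sup>2)) has_integral 1) {0<..}"
  shows "c = c_formula \<sigma>"
proof -
  define g where "g x = (f x)\<^sup>2 / (1 - (f x)\<^sup>2)" for x
  define a where "a = 1 - 1/(2*\<sigma>)"
  define b where "b = 2/\<sigma> - 1"
  have sp: "\<sigma> > 0" using \<sigma>pos .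
  have a0: "a > 0" and b0: "b > 0" using \<sigma>1 \<sigma>2 by (auto simp: a_def b_def field_simps)
  have ab: "a + b = 3 / (2*\<sigma>)" unfolding a_def b_def using sp by (simp add: field_simps)
  from mellin_g[of 1] \<sigma>1 \<sigma>2
  have M1: "set_integrable lborel {0<..} (\<lambda>x. complex_of_real (g x) * complex_of_real x powr (1 - 1))"
   and M2: "(LINT x:{0<..}|lborel. complex_of_real (g x) * complex_of_real x powr (1 - 1)) =
         complex_of_real c powr 1 / 1 *
         (Gamma (1 - 1 / (2 * complex_of_real \<sigma>)) * Gamma (2 * 1 / complex_of_real \<sigma> - 1) / Gamma (3 * 1 / (2*complex_of_real \<sigma>)))"
    unfolding g_def by auto
  have e: "complex_of_real (g x) * complex_of_real x powr (1 - 1) = complex_of_real (g x)" if "x \<in> {0<..}" for x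
    using that by simp
  have I0: "set_integrable lborel {0<..} (\<lambda>x. complex_of_real (g x))"
  proof -
    have eqI: "set_integrable lborel {0<..} (\<lambda>x. complex_of_real (g x) * complex_of_real x powr (1 - 1)) = set_integrable lborel {0<..} (\<lambda>x. complex_of_real (g x))"
      by (intro set_integrable_cong refl e)
    show "set_integrable lborel {0<..} (\<lambda>x. complex_of_real (g x))"
      using M1 unfolding eqI .
  qed
  have I: "set_integrable lborel {0<..} g" using I0 set_integrable_of_real_iff by blast
  have "(LINT x:{0<..}|lborel. g x) = integral {0<..} g" using set_borel_integral_eq_integral(2)[OF I] .
  also have "\<dots> = 1" using fint unfolding g_def[abs_def] by (rule integral_unique)
  finally have G1: "(LINT x:{0<..}|lborel. g x) = 1" .
  have L: "(LINT x:{0<..}|lborel. complex_of_real (g x) * complex_of_real x powr (1 - 1)) = 1"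
  proof -
    have "(LINT x:{0<..}|lborel. complex_of_real (g x) * complex_of_real x powr (1 - 1)) = (LINT x:{0<..}|lborel. complex_of_real (g x))"
      using e by (intro set_lebesgue_integral_cong) auto
    thus ?thesis using set_integral_of_real[where S="{0<..}" and M=lborel and f=g] G1 by simp
  qed
  have r1: "1 - 1 / (2 * complex_of_real \<sigma>) = of_real a" unfolding a_def by simp
  have r2: "2 * 1 / complex_of_real \<sigma> - 1 = of_real b" unfolding b_def by simp
  have r3: "3 * 1 / (2*complex_of_real \<sigma>) = of_real (a + b)" unfolding ab by simp
  have cc: "complex_of_real c powr 1 = of_real c" using cpos by (simp add: powr_of_real[symmetric])
  have "complex_of_real 1 = complex_of_real (c * (Gamma a * Gamma b / Gamma (a + b)))"
    using M2 unfolding L r1 r2 r3 cc Gamma_complex_of_real by simp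
  hence "1 = c * (Gamma a * Gamma b / Gamma (a + b))" by (simp only: of_real_eq_iff)
  moreover have "Gamma a > 0" "Gamma b > 0" "Gamma (a + b) > 0" using a0 b0 by auto
  ultimately have "c = Gamma (a + b) / (Gamma a * Gamma b)" by (simp add: field_simps)
  hence "c = Gamma (3 / (2*\<sigma>)) / (Gamma a * Gamma b)" unfolding ab .
  thus ?thesis unfolding c_formula_def a_def b_def .
qed

lemma real_mellin:
  assumes fint: "((\<lambda>x. (f x)\<^sup>2 / (1 - (f x)\<^sup>2)) has_integral 1) {0<..}"
  shows "(LINT x:{0<..}|lborel. f x * x powr ((1 - \<sigma>) - 1)) = 1 / (2 * (1 - \<sigma>)) * c powr (- \<sigma>)"
proof -
  define a where "a = 1 - 1/(2*\<sigma>)"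
  define b where "b = 2/\<sigma> - 1"
  have sp: "\<sigma> > 0" using \<sigma>pos .
  have a0: "a > 0" and b0: "b > 0" using \<sigma>1 \<sigma>2 by (auto simp: a_def b_def field_simps)
  have ab: "a + b = 3 / (2*\<sigma>)" unfolding a_def b_def using sp by (simp add: field_simps)
  have "c = Gamma (3 / (2*\<sigma>)) / (Gamma a * Gamma b)" using c_eq[OF fint] unfolding c_formula_def a_def b_def .
  hence cf: "c = Gamma (a + b) / (Gamma a * Gamma b)" unfolding ab .
  define s where "s = complex_of_real (1 - \<sigma>)"
  from mellin_f[of s] \<sigma>1 \<sigma>2
  have M2: "(LINT x:{0<..}|lborel. complex_of_real (f x) * complex_of_real x powr (s - 1)) =
         complex_of_real c powr s / (2 * s) *
         (Gamma (1/2 - s / (2 * complex_of_real \<sigma>)) * Gamma (2 * s / complex_of_real \<sigma> + 1) / Gamma (3/2 + 3 * s / (2*complex_of_real \<sigma>)))"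
    unfolding s_def by auto
  have e: "complex_of_real (f x) * complex_of_real x powr (s - 1) = complex_of_real (f x * x powr ((1 - \<sigma>) - 1))" if "x \<in> {0<..}" for x
    using that unfolding s_def by (simp add: powr_of_real[symmetric])
  have L: "(LINT x:{0<..}|lborel. complex_of_real (f x) * complex_of_real x powr (s - 1)) = of_real (LINT x:{0<..}|lborel. f x * x powr ((1 - \<sigma>) - 1))"
  proof -
    have "(LINT x:{0<..}|lborel. complex_of_real (f x) * complex_of_real x powr (s - 1)) = (LINT x:{0<..}|lborel. complex_of_real (f x * x powr ((1 - \<sigma>) - 1)))"
      using e by (intro set_lebesgue_integral_cong) auto
    thus ?thesis by (rule trans[OF _ set_integral_of_real])
  qed
  have r1: "1/2 - s / (2 * complex_of_real \<sigma>) = of_real a" unfolding a_def s_def using sp by (simp add: field_simps)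
  have r2: "2 * s / complex_of_real \<sigma> + 1 = of_real b" unfolding b_def s_def using sp by (simp add: field_simps)
  have r3: "3/2 + 3 * s / (2*complex_of_real \<sigma>) = of_real (a + b)" unfolding ab s_def using sp by (simp add: field_simps)
  have cc: "complex_of_real c powr s = of_real (c powr (1 - \<sigma>))" unfolding s_def using cpos by (intro powr_of_real) simp
  have "of_real (LINT x:{0<..}|lborel. f x * x powr ((1 - \<sigma>) - 1)) =
        complex_of_real (c powr (1 - \<sigma>) / (2 * (1 - \<sigma>)) * (Gamma a * Gamma b / Gamma (a + b)))"
    using M2 unfolding L r1 r2 r3 cc Gamma_complex_of_real by (simp add: s_def)
  hence R: "(LINT x:{0<..}|lborel. f x * x powr ((1 - \<sigma>) - 1)) = c powr (1 - \<sigma>) / (2 * (1 - \<sigma>)) * (Gamma a * Gamma b / Gamma (a + b))"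
    by (simp only: of_real_eq_iff)
  have "Gamma a > 0" "Gamma b > 0" "Gamma (a + b) > 0" using a0 b0 by auto
  hence "Gamma a * Gamma b / Gamma (a + b) = 1 / c" unfolding cf by simp
  moreover have "c powr (1 - \<sigma>) * (1 / c) = c powr (- \<sigma>)"
    using cpos by (simp add: powr_diff powr_minus field_simps)
  moreover have "c powr (1 - \<sigma>) / (2 * (1 - \<sigma>)) * (1 / c) = 1 / (2 * (1 - \<sigma>)) * (c powr (1 - \<sigma>) * (1 / c))"
    by simp
  ultimately show ?thesis unfolding R by simp
qed

end

theorem mainTheorem10:
  fixes \<sigma> c :: real and f :: "real \<Rightarrow> real"
  assumes \<sigma>: "1/2 < \<sigma>" "\<sigma> < 1"
    and cpos: "c > 0"
    and fcont: "continuous_on {0<..} f"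
    and frange: "\<forall>x>0. 0 < f x \<and> f x < 1"
    and feq: "\<forall>x>0. f x / (1 - (f x)\<^sup>2)\<^sup>2 = (c / x) powr \<sigma>"
    and fint: "((\<lambda>x. (f x)\<^sup>2 / (1 - (f x)\<^sup>2)) has_integral 1) {0<..}"
  shows
    "(smooth_on_real {0<..} f \<and>
     (\<forall>x y. 0 < x \<and> x < y \<longrightarrow> f y < f x) \<and>
     bij_betw f {0<..} {0<..<1}) \<and>
    (\<forall>x>0. f x \<le> (c / x) powr \<sigma>) \<and>
    (\<forall>x>0. min (1/2) (1/4 * (x / c) powr (\<sigma>/2)) \<le> 1 - f x \<and> 1 - f x \<le> (x / c) powr (\<sigma>/2)) \<and>
    (c = c_formula \<sigma> \<and> c < 1 \<and>
     (c_formula \<longlongrightarrow> 1/2) (at_left 1) \<and>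
     c_formula \<sim>[at_right (1/2)] (\<lambda>t. 2*t - 1)) \<and>
    (\<forall>s::complex. 0 < Re s \<and> Re s < \<sigma> \<longrightarrow>
       set_integrable lborel {0<..} (\<lambda>x. complex_of_real (f x) * complex_of_real x powr (s - 1)) \<and>
       (LINT x:{0<..}|lborel. complex_of_real (f x) * complex_of_real x powr (s - 1)) =
         complex_of_real c powr s / (2 * s) *
         (Gamma (1/2 - s / (2 * complex_of_real \<sigma>)) * Gamma (2 * s / complex_of_real \<sigma> + 1) / Gamma (3/2 + 3 * s / (2*complex_of_real \<sigma>)))) \<and>
    ((LINT x:{0<..}|lborel. f x * x powr ((1 - \<sigma>) - 1)) = 1 / (2 * (1 - \<sigma>)) * c powr (- \<sigma>)) \<and>
    (\<forall>s::complex. \<sigma>/2 < Re s \<and> Re s < 2*\<sigma> \<longrightarrow>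
       set_integrable lborel {0<..}
         (\<lambda>x. complex_of_real ((f x)\<^sup>2 / (1 - (f x)\<^sup>2)) * complex_of_real x powr (s - 1)) \<and>
       (LINT x:{0<..}|lborel. complex_of_real ((f x)\<^sup>2 / (1 - (f x)\<^sup>2)) * complex_of_real x powr (s - 1)) =
         complex_of_real c powr s / s *
         (Gamma (1 - s / (2 * complex_of_real \<sigma>)) * Gamma (2 * s / complex_of_real \<sigma> - 1) / Gamma (3 * s / (2*complex_of_real \<sigma>))))"
proof -
  interpret m: msetup \<sigma> c f using assms by unfold_locales auto
  have c: "c = c_formula \<sigma>" by (rule m.c_eq[OF fint])
  have P1: "smooth_on_real {0<..} f \<and> (\<forall>x y. 0 < x \<and> x < y \<longrightarrow> f y < f x) \<and> bij_betw f {0<..} {0<..<1}"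
    using m.f_smooth m.f_strict_dec m.f_bij by blast
  have P2: "\<forall>x>0. f x \<le> (c / x) powr \<sigma>" using m.part2 by blast
  have P3: "\<forall>x>0. min (1/2) (1/4 * (x / c) powr (\<sigma>/2)) \<le> 1 - f x \<and> 1 - f x \<le> (x / c) powr (\<sigma>/2)"
    using m.part3 by blast
  have P4: "c = c_formula \<sigma> \<and> c < 1 \<and> (c_formula \<longlongrightarrow> 1/2) (at_left 1) \<and> c_formula \<sim>[at_right (1/2)] (\<lambda>t. 2*t - 1)"
    using c c_formula_lt1[OF \<sigma>] c_formula_lim1 c_formula_asymp by simp
  show ?thesis
    using P1 P2 P3 P4 m.mellin_f m.real_mellin[OF fint] m.mellin_g by blast
qed


end
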